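(* Let $\beta>0$. (1) $\psi^*_{x,Y_M}(t)\ge0$ for all $t$. (2) For every $x\in(\lambda_t^-,\lambda^+)$ and $t\in\mathbb R$, if $M$ is large enough there exists $\gamma\in\mathbb R$ with $\psi'_{x,Y_M}(\gamma)=t$ and $\psi^*_{x,Y_M}(t)=\gamma t-\psi_{x,Y_M}(\gamma)$; moreover $\gamma<0$ when $t<\bar\lambda-x$ and $\gamma>0$ when $t>\bar\lambda-x$. (3) Let $x\in(\lambda_t^-,\lambda^+)$ and $t_1,t_2\in\mathbb R$. For sufficiently large $M$, let $\psi^*_{x,Y_M}(t_1)$ and $\psi^*_{x,Y_M}(t_2)$ be attained at $\alpha\in\mathbb R$ and $\gamma\in\mathbb R$ respectively. Then $\psi^*_{x,Y_M}(t_2)-\psi^*_{x,Y_M}(t_1)\le\gamma(t_2-t_1)$, with equality if and only if $t_1=t_2$.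
   Context: $Y_M$ has density $e^{-y}/(1-e^{-M})$ on $[0,M]$. Let $\lambda^\pm=(1\pm\sqrt\beta)^2$, $\mu_\lambda$ the probability measure $d\mu_\lambda=\Big((1-\tfrac1\beta)^+\delta(\lambda)+\frac{\sqrt{(\lambda-\lambda^-)^+(\lambda^+-\lambda)^+}}{2\pi\beta\lambda}\Big)d\lambda$, $\lambda_t^-=0$ if $\beta\ge1$ and $=\lambda^-$ if $\beta<1$, $\bar\lambda=\int\lambda\,d\mu_\lambda$. Define $\psi_{x,Y_M}(\alpha)=\int\log\mathrm E[e^{\alpha(\lambda-x)Y_M}]\,d\mu_\lambda$ and $\psi^*_{x,Y_M}(t)=\sup_{\alpha\in\mathbb R}[\alpha t-\psi_{x,Y_M}(\alpha)]$. *)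

theory Defs
  imports "HOL-Analysis.Analysis"
begin

definition mgf_YM :: "real \<Rightarrow> real \<Rightarrow> real" where
  "mgf_YM M s = (LINT y:{0..M}|lborel. exp (s * y) * (exp (- y) / (1 - exp (- M))))"

definition lam_plus :: "real \<Rightarrow> real" where
  "lam_plus \<beta> = (1 + sqrt \<beta>)\<^sup>2"

definition lam_minus :: "real \<Rightarrow> real" where
  "lam_minus \<beta> = (1 - sqrt \<beta>)\<^sup>2"

definition lam_t_minus :: "real \<Rightarrow> real" where
  "lam_t_minus \<beta> = (if \<beta> \<ge> 1 then 0 else lam_minus \<beta>)"

text \<open>Absolutely continuous part of the Marchenko--Pastur law mu_lambda.\<close>
definition mp_density :: "real \<Rightarrow> real \<Rightarrow> real" where
  "mp_density \<beta> l =
     sqrt (max 0 (l - lam_minus \<beta>) * max 0 (lam_plus \<beta> - l)) / (2 * pi * \<beta> * l)"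

definition mp_int :: "real \<Rightarrow> (real \<Rightarrow> real) \<Rightarrow> real" where
  "mp_int \<beta> f = max 0 (1 - 1 / \<beta>) * f 0 + (LINT l|lborel. mp_density \<beta> l * f l)"

definition lam_bar :: "real \<Rightarrow> real" where
  "lam_bar \<beta> = mp_int \<beta> (\<lambda>l. l)"

definition psi :: "real \<Rightarrow> real \<Rightarrow> real \<Rightarrow> real \<Rightarrow> real" where
  "psi \<beta> x M \<alpha> = mp_int \<beta> (\<lambda>l. ln (mgf_YM M (\<alpha> * (l - x))))"

text \<open>Legendre transform, valued in extended reals (may be +infinity).\<close>
definition psi_star :: "real \<Rightarrow> real \<Rightarrow> real \<Rightarrow> real \<Rightarrow> ereal" where
  "psi_star \<beta> x M t = (SUP \<alpha>\<in>(UNIV::real set). ereal (\<alpha> * t - psi \<beta> x M \<alpha>))"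

end

theory Submission
  imports Defs "HOL-Real_Asymp.Real_Asymp"
begin

definition pY :: "real \<Rightarrow> real \<Rightarrow> real" where
  "pY M y = exp (- y) / (1 - exp (- M))"

definition mY :: "real \<Rightarrow> real" where
  "mY M = (1 - (M + 1) * exp (- M)) / (1 - exp (- M))"

lemma Z_pos: "M > 0 \<Longrightarrow> 1 - exp (- M) > (0::real)"
  by simp

lemma mgf_integral:
  assumes "M > 0"
  shows "mgf_YM M s = integral {0..M} (\<lambda>y. exp (s * y) * pY M y)"
proof -
  have "continuous_on {0..M} (\<lambda>y. exp (s * y) * pY M y)"
    unfolding pY_def by (intro continuous_intros) (use assms in auto)
  from set_borel_integral_eq_integral(2)[OF borel_integrable_atLeastAtMost'[OF this]]
  show ?thesis unfolding mgf_YM_def pY_def by simp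
qed

lemma mgf_closed:
  assumes "M > 0" "s \<noteq> 1"
  shows "((\<lambda>y. exp (s * y) * pY M y) has_integral
     (exp ((s - 1) * M) - 1) / ((s - 1) * (1 - exp (- M)))) {0..M}"
proof -
  let ?Z = "1 - exp (- M)"
  have Z: "?Z > 0" using assms by simp
  have nz: "(s - 1) * ?Z \<noteq> 0" using assms Z by simp
  have e: "exp (s * y) * pY M y = exp ((s - 1) * y) / ?Z" for y
    unfolding pY_def by (simp add: algebra_simps exp_diff[symmetric] exp_add[symmetric])
  have "((\<lambda>y. exp ((s - 1) * y) / ?Z) has_integral
      (exp ((s - 1) * M) / ((s - 1) * ?Z) - exp ((s - 1) * 0) / ((s - 1) * ?Z))) {0..M}"
  proof (rule fundamental_theorem_of_calculus)
    show "0 \<le> M" using assms by simp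
    fix y assume "y \<in> {0..M}"
    show "((\<lambda>y. exp ((s - 1) * y) / ((s - 1) * ?Z)) has_vector_derivative exp ((s - 1) * y) / ?Z) (at y within {0..M})"
      unfolding has_real_derivative_iff_has_vector_derivative[symmetric]
      by (rule derivative_eq_intros refl)+ (use nz in \<open>auto simp: divide_simps\<close>)
  qed
  then show ?thesis using assms Z by (simp add: e diff_divide_distrib)
qed

lemma p_integral: assumes "M > 0" shows "(pY M has_integral 1) {0..M}"
proof -
  have "((\<lambda>y. exp (0 * y) * pY M y) has_integral 1) {0..M}"
    using mgf_closed[OF assms, of 0] assms by simp
  then show ?thesis by simp
qed

lemma aux_eq1: "(1::real) - exp (- M) \<noteq> 0 \<Longrightarrow> ((- (1 + 0) * exp (- y) + exp (- y) * - 1 * - (y + 1)) *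
      (1 - exp (- M)) -
      - (y + 1) * exp (- y) * 0) /
     ((1 - exp (- M)) * (1 - exp (- M))) =
     y * (exp (- y) / (1 - exp (- M)))"
  by (simp add: divide_simps) (simp add: algebra_simps)

lemma yp_integral: assumes "M > 0" shows "((\<lambda>y. y * pY M y) has_integral mY M) {0..M}"
proof -
  let ?Z = "1 - exp (- M)"
  have Z: "?Z \<noteq> 0" using assms by simp
  have "((\<lambda>y. y * pY M y) has_integral
      ((- (M + 1) * exp (- M) / ?Z) - (- (0 + 1) * exp (- 0) / ?Z))) {0..M}"
  proof (rule fundamental_theorem_of_calculus)
    show "0 \<le> M" using assms by simp
    fix y assume "y \<in> {0..M}"
    show "((\<lambda>y. - (y + 1) * exp (- y) / ?Z) has_vector_derivative y * pY M y) (at y within {0..M})"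
      unfolding has_real_derivative_iff_has_vector_derivative[symmetric] pY_def
      by (rule derivative_eq_intros refl)+ (rule Z, rule aux_eq1[OF Z])
  qed
  then show ?thesis unfolding mY_def using Z by (simp add: field_simps)
qed

lemma pY_nonneg: "M > 0 \<Longrightarrow> pY M y \<ge> 0"
  unfolding pY_def by simp

lemma cont_mgf_int: "M > 0 \<Longrightarrow> continuous_on S (\<lambda>y. exp (s * y) * pY M y)"
  unfolding pY_def by (intro continuous_intros) auto

lemma mgf_has_integral: "M > 0 \<Longrightarrow> ((\<lambda>y. exp (s * y) * pY M y) has_integral mgf_YM M s) {0..M}"
  using mgf_integral[of M s] integrable_continuous_interval[OF cont_mgf_int]
  by (simp add: integrable_integral)

lemma mY_bounds: assumes "M > 0" shows "0 \<le> mY M" "mY M \<le> 1"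
proof -
  have Z: "1 - exp (- M) > 0" using assms by simp
  have "M + 1 \<le> exp M" using exp_ge_add_one_self[of M] by linarith
  then have "(M + 1) * exp (- M) \<le> 1"
    by (simp add: exp_minus field_simps)
  then show "0 \<le> mY M" unfolding mY_def using Z by simp
  have "exp (- M) \<le> (M + 1) * exp (- M)" using assms by simp
  then show "mY M \<le> 1" unfolding mY_def using Z by simp
qed

lemma mgf_jensen:
  assumes "M > 0"
  shows "exp (s * mY M) \<le> mgf_YM M s"
proof -
  let ?m = "mY M"
  have i: "((\<lambda>y. (exp (s * ?m) * (1 - s * ?m)) * pY M y + (exp (s * ?m) * s) * (y * pY M y))
     has_integral ((exp (s * ?m) * (1 - s * ?m)) * 1 + (exp (s * ?m) * s) * ?m)) {0..M}"
    by (intro has_integral_add has_integral_mult_right p_integral yp_integral assms)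
  have "exp (s * ?m) * (1 - s * ?m) * pY M y + exp (s * ?m) * s * (y * pY M y)
        \<le> exp (s * y) * pY M y" for y
  proof -
    have "1 + s * (y - ?m) \<le> exp (s * (y - ?m))" by (rule exp_ge_add_one_self)
    then have "exp (s * ?m) * (1 + s * (y - ?m)) \<le> exp (s * ?m) * exp (s * (y - ?m))"
      by simp
    also have "\<dots> = exp (s * y)" by (simp add: exp_add[symmetric] algebra_simps)
    finally have "exp (s * ?m) * (1 + s * (y - ?m)) * pY M y \<le> exp (s * y) * pY M y"
      by (rule mult_right_mono) (rule pY_nonneg[OF assms])
    then show ?thesis by (simp add: algebra_simps)
  qed
  from has_integral_le[OF i mgf_has_integral[OF assms] this]
  show ?thesis by (simp add: algebra_simps)
qed

lemma mgf_pos: "M > 0 \<Longrightarrow> mgf_YM M s > 0"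
  using mgf_jensen[of M s] by (meson exp_gt_zero less_le_trans)

lemma L_jensen: "M > 0 \<Longrightarrow> s * mY M \<le> ln (mgf_YM M s)"
  using mgf_jensen[of M s] mgf_pos[of M s] by (simp add: ln_ge_iff)

lemma L_zero: "M > 0 \<Longrightarrow> ln (mgf_YM M 0) = 0"
  using mgf_integral[of M 0] integral_unique[OF p_integral, of M] by simp

lemma mgf_mono_lip:
  assumes "M > 0" "s \<le> s'"
  shows "mgf_YM M s \<le> mgf_YM M s'" "mgf_YM M s' \<le> exp ((s' - s) * M) * mgf_YM M s"
proof -
  show "mgf_YM M s \<le> mgf_YM M s'"
  proof (rule has_integral_le[OF mgf_has_integral mgf_has_integral])
    fix y assume "y \<in> {0..M}"
    then show "exp (s * y) * pY M y \<le> exp (s' * y) * pY M y"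
      using assms by (intro mult_right_mono pY_nonneg) (auto intro: mult_right_mono)
  qed (use assms in auto)
  have sc: "((\<lambda>y. exp ((s' - s) * M) * (exp (s * y) * pY M y)) has_integral exp ((s' - s) * M) * mgf_YM M s) {0..M}"
    by (intro has_integral_mult_right mgf_has_integral assms)
  show "mgf_YM M s' \<le> exp ((s' - s) * M) * mgf_YM M s"
  proof (rule has_integral_le[OF mgf_has_integral[OF assms(1)] sc])
    fix y assume y: "y \<in> {0..M}"
    have "s' * y \<le> (s' - s) * M + s * y"
    proof -
      have "(s' - s) * y \<le> (s' - s) * M" using y assms by (intro mult_left_mono) auto
      then show ?thesis by (simp add: algebra_simps)
    qed
    then have "exp (s' * y) \<le> exp ((s' - s) * M) * exp (s * y)"
      by (simp add: exp_add[symmetric])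
    then show "exp (s' * y) * pY M y \<le> exp ((s' - s) * M) * (exp (s * y) * pY M y)"
      using pY_nonneg[OF assms(1), of y] by (metis mult.assoc mult_right_mono)
  qed
qed

lemma L_lip:
  assumes "M > 0"
  shows "\<bar>ln (mgf_YM M s) - ln (mgf_YM M s')\<bar> \<le> M * \<bar>s - s'\<bar>"
proof -
  have *: "\<bar>ln (mgf_YM M s) - ln (mgf_YM M s')\<bar> \<le> M * \<bar>s - s'\<bar>" if "s \<le> s'" for s s'
  proof -
    note ml = mgf_mono_lip[OF assms that]
    have p: "mgf_YM M s > 0" "mgf_YM M s' > 0" using mgf_pos assms by auto
    have a: "ln (mgf_YM M s) \<le> ln (mgf_YM M s')" using ml p by simp
    have "ln (mgf_YM M s') \<le> ln (exp ((s' - s) * M) * mgf_YM M s)" using ml p by simp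
    also have "\<dots> = (s' - s) * M + ln (mgf_YM M s)" using p by (simp add: ln_mult)
    finally show ?thesis using a that by (simp add: algebra_simps)
  qed
  show ?thesis
  proof (cases "s \<le> s'")
    case True then show ?thesis by (rule *)
  next
    case False then show ?thesis using *[of s' s] by (simp add: abs_minus_commute)
  qed
qed

lemma L_abs_bound: "M > 0 \<Longrightarrow> \<bar>ln (mgf_YM M s)\<bar> \<le> M * \<bar>s\<bar>"
  using L_lip[of M s 0] L_zero[of M] by simp

lemma exp_ge_2u: "(u::real) \<ge> 0 \<Longrightarrow> 2 * u \<le> exp u"
proof -
  assume u: "u \<ge> 0"
  have "u \<le> exp (u - 1)" using exp_ge_add_one_self[of "u - 1"] by simp
  moreover have "2 \<le> exp (1::real)" using exp_ge_add_one_self[of 1] by simp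
  ultimately have "u * 2 \<le> exp (u - 1) * exp 1" using u by (intro mult_mono) auto
  then show ?thesis by (simp add: exp_add[symmetric] mult.commute)
qed

lemma L_lower_pos:
  assumes "M \<ge> 1" "s \<ge> 0"
  shows "s * (M - 1) - 2 * M \<le> ln (mgf_YM M s)"
proof (cases "s \<le> 2")
  case True
  have M: "M > 0" using assms by simp
  have "s * (M - 1) \<le> 2 * (M - 1)" using True assms by (intro mult_right_mono) auto
  moreover have "0 \<le> s * mY M" using mY_bounds[OF M] assms by simp
  ultimately show ?thesis using L_jensen[OF M, of s] by simp
next
  case False
  have M: "M > 0" using assms by simp
  let ?Z = "1 - exp (- M)"
  have Z: "0 < ?Z" "?Z \<le> 1" using M by auto
  have u: "s - 1 > 1" using False by simp
  have mg: "mgf_YM M s = (exp ((s - 1) * M) - 1) / ((s - 1) * ?Z)"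
    using integral_unique[OF mgf_closed[OF M, of s]] mgf_integral[OF M, of s] False by simp
  have e1: "exp ((s - 1) * M) \<ge> 2"
  proof -
    have "(s - 1) * M \<ge> 1" using u assms by (metis less_eq_real_def mult_mono' mult_1_right zero_le_one)
    then have "exp ((s - 1) * M) \<ge> exp 1" by simp
    moreover have "2 \<le> exp (1::real)" using exp_ge_add_one_self[of 1] by simp
    ultimately show ?thesis by linarith
  qed
  have "exp ((s - 1) * M) / 2 \<le> exp ((s - 1) * M) - 1" using e1 by simp
  then have "(exp ((s - 1) * M) / 2) / (s - 1) \<le> (exp ((s - 1) * M) - 1) / (s - 1)"
    using u by (intro divide_right_mono) auto
  then have "exp ((s - 1) * M) / (2 * (s - 1)) \<le> (exp ((s - 1) * M) - 1) / (s - 1)"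
    by simp
  also have "\<dots> \<le> mgf_YM M s" unfolding mg using u Z e1
    by (simp add: divide_simps mult_left_le)
  finally have a: "exp ((s - 1) * M) / (2 * (s - 1)) \<le> mgf_YM M s" .
  have "exp ((s - 1) * M) / exp (s - 1) \<le> exp ((s - 1) * M) / (2 * (s - 1))"
    using exp_ge_2u[of "s - 1"] u by (intro divide_left_mono) auto
  with a have "exp ((s - 1) * M - (s - 1)) \<le> mgf_YM M s" by (simp add: exp_diff)
  then have "(s - 1) * M - (s - 1) \<le> ln (mgf_YM M s)" using mgf_pos[OF M, of s] by (simp add: ln_ge_iff)
  moreover have "s * (M - 1) - 2 * M \<le> (s - 1) * M - (s - 1)" using assms by (simp add: algebra_simps)
  ultimately show ?thesis by linarith
qed

lemma leib_k:
  assumes "M > 0"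
  shows "((\<lambda>s. integral {0..M} (\<lambda>y. y ^ k * exp (s * y) * pY M y)) has_field_derivative
          integral {0..M} (\<lambda>y. y ^ Suc k * exp (s * y) * pY M y)) (at s)"
proof -
  have "((\<lambda>s. integral (cbox 0 M) (\<lambda>y. y ^ k * exp (s * y) * pY M y)) has_field_derivative
          integral (cbox 0 M) (\<lambda>y. y ^ Suc k * exp (s * y) * pY M y)) (at s within UNIV)"
  proof (rule leibniz_rule_field_derivative[where fx = "\<lambda>s y. y ^ Suc k * exp (s * y) * pY M y"])
    fix x :: real and t :: real
    show "((\<lambda>x. t ^ k * exp (x * t) * pY M t) has_field_derivative t ^ Suc k * exp (x * t) * pY M t) (at x within UNIV)"
      by (rule derivative_eq_intros refl)+ (simp add: algebra_simps)
  next
    fix x :: real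
    show "(\<lambda>y. y ^ k * exp (x * y) * pY M y) integrable_on cbox 0 M"
      unfolding pY_def using assms by (intro integrable_continuous continuous_intros) auto
  next
    show "continuous_on (UNIV \<times> cbox 0 M) (\<lambda>(x, t). t ^ Suc k * exp (x * t) * pY M t)"
      unfolding pY_def using assms by (auto intro!: continuous_intros simp: split_beta)
  qed auto
  then show ?thesis by simp
qed

definition mgf1 :: "real \<Rightarrow> real \<Rightarrow> real" where
  "mgf1 M s = integral {0..M} (\<lambda>y. y * exp (s * y) * pY M y)"

lemma mgf_deriv: "M > 0 \<Longrightarrow> (mgf_YM M has_field_derivative mgf1 M s) (at s)"
proof -
  assume M: "M > 0"
  have e: "mgf_YM M = (\<lambda>s. integral {0..M} (\<lambda>y. y ^ 0 * exp (s * y) * pY M y))"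
    using mgf_integral[OF M] by auto
  show ?thesis unfolding e mgf1_def using leib_k[OF M, of 0 s] by simp
qed

lemma mgf1_cont: "M > 0 \<Longrightarrow> isCont (mgf1 M) s"
proof -
  assume M: "M > 0"
  have e: "mgf1 M = (\<lambda>s. integral {0..M} (\<lambda>y. y ^ 1 * exp (s * y) * pY M y))"
    unfolding mgf1_def by auto
  show ?thesis unfolding e using leib_k[OF M, of 1 s] by (rule DERIV_isCont)
qed

lemma mgf_cont: "M > 0 \<Longrightarrow> isCont (mgf_YM M) s"
  using mgf_deriv by (rule DERIV_isCont)

definition Ld :: "real \<Rightarrow> real \<Rightarrow> real" where
  "Ld M s = mgf1 M s / mgf_YM M s"

lemma L_deriv: "M > 0 \<Longrightarrow> ((\<lambda>s. ln (mgf_YM M s)) has_field_derivative Ld M s) (at s)"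
  unfolding Ld_def
  by (rule derivative_eq_intros refl mgf_deriv | assumption | simp add: mgf_pos)+

lemma Ld_cont: "M > 0 \<Longrightarrow> continuous_on UNIV (Ld M)"
  unfolding Ld_def continuous_on_eq_continuous_at[OF open_UNIV]
  using mgf1_cont mgf_cont mgf_pos by (auto intro!: continuous_intros simp: less_imp_neq[symmetric])

lemma d_R:
  fixes a b l :: real
  assumes "a < l" "l < b"
  shows "((\<lambda>l. sqrt ((l - a) * (b - l))) has_real_derivative (a + b - 2 * l) / (2 * sqrt ((l - a) * (b - l)))) (at l)"
proof -
  have p: "(l - a) * (b - l) > 0" using assms by simp
  have i: "((\<lambda>l. (l - a) * (b - l)) has_real_derivative (a + b - 2 * l)) (at l)"
    by (rule derivative_eq_intros refl)+ simp
  have "((\<lambda>l. sqrt ((l - a) * (b - l))) has_real_derivative inverse (sqrt ((l - a) * (b - l))) / 2 * (a + b - 2 * l)) (at l)"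
    by (rule DERIV_chain2[OF DERIV_real_sqrt[OF p] i])
  moreover have eq: "inverse q / 2 * d = d / (2 * q)" for q d :: real
    by (simp add: field_simps)
  ultimately show ?thesis by (simp only: eq)
qed

lemma d_arcsin:
  fixes u :: "real \<Rightarrow> real"
  assumes "(u has_real_derivative u') (at l)" "-1 < u l" "u l < 1" "sqrt (1 - (u l)\<^sup>2) = q" 
  shows "((\<lambda>l. arcsin (u l)) has_real_derivative u' / q) (at l)"
proof -
  have "((\<lambda>l. arcsin (u l)) has_real_derivative inverse (sqrt (1 - (u l)\<^sup>2)) * u') (at l)"
    using DERIV_chain2[OF DERIV_arcsin[OF assms(2,3)] assms(1)] .
  then show ?thesis using assms(4) by (simp add: divide_inverse mult.commute)
qed

lemma alg_F:
  fixes a b l R S :: real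
  assumes "0 < a" "a < l" "l < b" "R > 0" "R * R = (l - a) * (b - l)" "S > 0" "S * S = a * b"
  shows "(a + b - 2 * l) / (2 * R) + (a + b) / 2 * ((2 / (b - a)) / (2 * R / (b - a)))
         - S * ((2 * a * b / ((b - a) * l\<^sup>2)) / (2 * S * R / (l * (b - a)))) = R / l"
proof -
  have ne: "b - a \<noteq> 0" "l \<noteq> 0" "R \<noteq> 0" "S \<noteq> 0" using assms by auto
  have p2: "(a + b) / 2 * ((2 / (b - a)) / (2 * R / (b - a))) = (a + b) / (2 * R)"
    using ne by (simp add: field_simps)
  have p3: "S * ((2 * a * b / ((b - a) * l\<^sup>2)) / (2 * S * R / (l * (b - a)))) = (a * b) / (l * R)"
    using ne by (simp add: field_simps power2_eq_square)
  have "(a + b - 2 * l) / (2 * R) + (a + b) / (2 * R) - (a * b) / (l * R) = ((a + b - l) * l - a * b) / (l * R)"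
    using ne by (simp add: field_simps)
  also have "(a + b - l) * l - a * b = R * R" using assms by (simp add: algebra_simps)
  also have "R * R / (l * R) = R / l" using ne by simp
  finally show ?thesis using p2 p3 by simp
qed

lemma sqrt_eqI: "(x::real) = y\<^sup>2 \<Longrightarrow> y \<ge> 0 \<Longrightarrow> sqrt x = y"
  by simp

lemma F_integral_pos:
  fixes a b :: real
  assumes ab: "0 < a" "a < b"
  shows "((\<lambda>l. sqrt ((l - a) * (b - l)) / l) has_integral (pi * (a + b) / 2 - pi * sqrt (a * b))) {a..b}"
proof -
  define R where "R l = sqrt ((l - a) * (b - l))" for l
  define u1 where "u1 l = (2 * l - a - b) / (b - a)" for l
  define u2 where "u2 l = ((a + b) * l - 2 * a * b) / (l * (b - a))" for l
  define S where "S = sqrt (a * b)"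
  define F where "F l = R l + (a + b) / 2 * arcsin (u1 l) - S * arcsin (u2 l)" for l
  have S: "S > 0" "S * S = a * b" unfolding S_def using ab by auto
  have id1: "1 - (u1 l)\<^sup>2 = (2 * R l / (b - a))\<^sup>2" if "a \<le> l" "l \<le> b" for l
  proof -
    have r: "(R l)\<^sup>2 = (l - a) * (b - l)" unfolding R_def using that by simp
    have ne: "b - a \<noteq> 0" using ab by simp
    have "1 - (u1 l)\<^sup>2 = ((b - a)\<^sup>2 - (2 * l - a - b)\<^sup>2) / (b - a)\<^sup>2"
      unfolding u1_def using ne by (simp add: field_simps)
    also have "(b - a)\<^sup>2 - (2 * l - a - b)\<^sup>2 = 4 * ((l - a) * (b - l))"
      by (simp add: power2_eq_square algebra_simps)
    also have "4 * ((l - a) * (b - l)) / (b - a)\<^sup>2 = (2 * R l / (b - a))\<^sup>2"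
      using r by (simp add: power_divide power_mult_distrib)
    finally show ?thesis .
  qed
  have id2: "1 - (u2 l)\<^sup>2 = (2 * S * R l / (l * (b - a)))\<^sup>2" if "a \<le> l" "l \<le> b" for l
  proof -
    have r: "(R l)\<^sup>2 = (l - a) * (b - l)" unfolding R_def using that by simp
    have l0: "l \<noteq> 0" using that ab by simp
    have "(2 * S * R l / (l * (b - a)))\<^sup>2 = 4 * (S * S) * (R l)\<^sup>2 / (l * (b - a))\<^sup>2"
      by (simp add: power2_eq_square field_simps)
    also have "\<dots> = 4 * (a * b) * ((l - a) * (b - l)) / (l * (b - a))\<^sup>2" using S r by simp
    also have "\<dots> = ((l * (b - a))\<^sup>2 - ((a + b) * l - 2 * a * b)\<^sup>2) / (l * (b - a))\<^sup>2"
      by (simp add: power2_eq_square algebra_simps)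
    also have "\<dots> = 1 - (u2 l)\<^sup>2" unfolding u2_def using ab l0
      by (simp add: field_simps)
    finally show ?thesis by simp
  qed
  have u1b: "-1 \<le> u1 l \<and> u1 l \<le> 1" if "a \<le> l" "l \<le> b" for l
  proof -
    have "(u1 l)\<^sup>2 \<le> 1" using id1[OF that] by (metis diff_ge_0_iff_ge zero_le_power2)
    then show ?thesis using abs_le_square_iff[of "u1 l" 1] by (simp add: abs_le_iff)
  qed
  have u2b: "-1 \<le> u2 l \<and> u2 l \<le> 1" if "a \<le> l" "l \<le> b" for l
  proof -
    have "(u2 l)\<^sup>2 \<le> 1" using id2[OF that] by (metis diff_ge_0_iff_ge zero_le_power2)
    then show ?thesis using abs_le_square_iff[of "u2 l" 1] by (simp add: abs_le_iff)
  qed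
  have contF: "continuous_on {a..b} F"
  proof -
    have c1: "continuous_on {a..b} u1" unfolding u1_def using ab by (intro continuous_intros) auto
    have c2: "continuous_on {a..b} u2" unfolding u2_def using ab by (intro continuous_intros) auto
    have cR: "continuous_on {a..b} R" unfolding R_def by (intro continuous_intros)
    show ?thesis unfolding F_def
      by (intro continuous_intros c1 c2 cR continuous_on_arcsin) (use u1b u2b in auto)
  qed
  have derF: "(F has_real_derivative R l / l) (at l)" if l: "a < l" "l < b" for l
  proof -
    have Rp: "R l > 0" "R l * R l = (l - a) * (b - l)" unfolding R_def using l by auto
    have dR: "(R has_real_derivative (a + b - 2 * l) / (2 * R l)) (at l)"
      unfolding R_def using d_R[OF l] by simp
    have du1: "(u1 has_real_derivative 2 / (b - a)) (at l)"
      unfolding u1_def[abs_def] apply (rule derivative_eq_intros refl)+ using ab apply (simp_all add: divide_simps) done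
    have du2: "(u2 has_real_derivative 2 * a * b / ((b - a) * l\<^sup>2)) (at l)"
      unfolding u2_def[abs_def] apply (rule derivative_eq_intros refl)+ using ab l apply (simp_all add: divide_simps power2_eq_square) apply (simp add: algebra_simps) done
    have "(2 * R l / (b - a))\<^sup>2 > 0" using Rp ab by simp
    then have lt1: "(u1 l)\<^sup>2 < 1" using id1[of l] l by linarith
    have "(2 * S * R l / (l * (b - a)))\<^sup>2 > 0" using Rp ab S l by simp
    then have lt2: "(u2 l)\<^sup>2 < 1" using id2[of l] l by linarith
    have q1: "sqrt (1 - (u1 l)\<^sup>2) = 2 * R l / (b - a)"
      using id1[of l] l Rp ab by (intro sqrt_eqI) auto
    have q2: "sqrt (1 - (u2 l)\<^sup>2) = 2 * S * R l / (l * (b - a))"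
      using id2[of l] l Rp ab S by (intro sqrt_eqI) auto
    have a1: "((\<lambda>l. arcsin (u1 l)) has_real_derivative (2 / (b - a)) / (2 * R l / (b - a))) (at l)"
      using lt1 abs_square_less_1[of "u1 l"] by (intro d_arcsin[OF du1 _ _ q1]) (auto simp: abs_less_iff)
    have a2: "((\<lambda>l. arcsin (u2 l)) has_real_derivative (2 * a * b / ((b - a) * l\<^sup>2)) / (2 * S * R l / (l * (b - a)))) (at l)"
      using lt2 abs_square_less_1[of "u2 l"] by (intro d_arcsin[OF du2 _ _ q2]) (auto simp: abs_less_iff)
    have "(F has_real_derivative (a + b - 2 * l) / (2 * R l) + (a + b) / 2 * ((2 / (b - a)) / (2 * R l / (b - a)))
         - S * ((2 * a * b / ((b - a) * l\<^sup>2)) / (2 * S * R l / (l * (b - a))))) (at l)"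
      unfolding F_def[abs_def]
      by (intro DERIV_add DERIV_diff DERIV_cmult dR a1 a2)
    then show ?thesis using alg_F[OF ab(1) l Rp S] by simp
  qed
  have "((\<lambda>l. R l / l) has_integral (F b - F a)) {a..b}"
    by (rule fundamental_theorem_of_calculus_interior[OF _ contF])
       (use ab derF in \<open>auto simp: has_real_derivative_iff_has_vector_derivative[symmetric]\<close>)
  moreover have "F b - F a = pi * (a + b) / 2 - pi * sqrt (a * b)"
  proof -
    have "u1 b = 1" "u1 a = -1" unfolding u1_def using ab by (auto simp: field_simps)
    moreover have "u2 b = 1" "u2 a = -1" unfolding u2_def using ab by (auto simp: field_simps)
    moreover have "R a = 0" "R b = 0" unfolding R_def by auto
    ultimately show ?thesis unfolding F_def S_def by (simp add: field_simps)
  qed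
  ultimately show ?thesis unfolding R_def by simp
qed

lemma F_integral_zero:
  fixes b :: real
  assumes ab: "0 < b"
  shows "((\<lambda>l. sqrt ((l - 0) * (b - l)) / l) has_integral (pi * b / 2)) {0..b}"
proof -
  define a :: real where "a = 0"
  define R where "R l = sqrt ((l - a) * (b - l))" for l
  define u1 where "u1 l = (2 * l - a - b) / (b - a)" for l
  define F where "F l = R l + (a + b) / 2 * arcsin (u1 l)" for l
  have id1: "1 - (u1 l)\<^sup>2 = (2 * R l / (b - a))\<^sup>2" if "a \<le> l" "l \<le> b" for l
  proof -
    have r: "(R l)\<^sup>2 = (l - a) * (b - l)" unfolding R_def using that by simp
    have ne: "b - a \<noteq> 0" using ab a_def by simp
    have "1 - (u1 l)\<^sup>2 = ((b - a)\<^sup>2 - (2 * l - a - b)\<^sup>2) / (b - a)\<^sup>2"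
      unfolding u1_def using ne by (simp add: field_simps)
    also have "(b - a)\<^sup>2 - (2 * l - a - b)\<^sup>2 = 4 * ((l - a) * (b - l))"
      by (simp add: power2_eq_square algebra_simps)
    also have "4 * ((l - a) * (b - l)) / (b - a)\<^sup>2 = (2 * R l / (b - a))\<^sup>2"
      using r by (simp add: power_divide power_mult_distrib)
    finally show ?thesis .
  qed
  have u1b: "-1 \<le> u1 l \<and> u1 l \<le> 1" if "a \<le> l" "l \<le> b" for l
  proof -
    have "(u1 l)\<^sup>2 \<le> 1" using id1[OF that] by (metis diff_ge_0_iff_ge zero_le_power2)
    then show ?thesis using abs_le_square_iff[of "u1 l" 1] by (simp add: abs_le_iff)
  qed
  have contF: "continuous_on {a..b} F"
  proof -
    have c1: "continuous_on {a..b} u1" unfolding u1_def using ab a_def by (intro continuous_intros) auto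
    have cR: "continuous_on {a..b} R" unfolding R_def by (intro continuous_intros)
    show ?thesis unfolding F_def
      by (intro continuous_intros c1 cR continuous_on_arcsin) (use u1b in auto)
  qed
  have derF: "(F has_real_derivative R l / l) (at l)" if l: "a < l" "l < b" for l
  proof -
    have Rp: "R l > 0" "R l * R l = (l - a) * (b - l)" unfolding R_def using l by auto
    have dR: "(R has_real_derivative (a + b - 2 * l) / (2 * R l)) (at l)"
      unfolding R_def using d_R[OF l] by simp
    have du1: "(u1 has_real_derivative 2 / (b - a)) (at l)"
      unfolding u1_def[abs_def] apply (rule derivative_eq_intros refl)+ using ab a_def apply (simp_all add: divide_simps) done
    have "(2 * R l / (b - a))\<^sup>2 > 0" using Rp ab a_def by simp
    then have lt1: "(u1 l)\<^sup>2 < 1" using id1[of l] l by linarith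
    have q1: "sqrt (1 - (u1 l)\<^sup>2) = 2 * R l / (b - a)"
      using id1[of l] l Rp ab a_def by (intro sqrt_eqI) auto
    have a1: "((\<lambda>l. arcsin (u1 l)) has_real_derivative (2 / (b - a)) / (2 * R l / (b - a))) (at l)"
      using lt1 abs_square_less_1[of "u1 l"] by (intro d_arcsin[OF du1 _ _ q1]) (auto simp: abs_less_iff)
    have "(F has_real_derivative (a + b - 2 * l) / (2 * R l) + (a + b) / 2 * ((2 / (b - a)) / (2 * R l / (b - a)))) (at l)"
      unfolding F_def[abs_def]
      by (intro DERIV_add DERIV_cmult dR a1)
    moreover have "(a + b - 2 * l) / (2 * R l) + (a + b) / 2 * ((2 / (b - a)) / (2 * R l / (b - a))) = R l / l"
    proof -
      have ne: "b \<noteq> 0" "R l \<noteq> 0" "l \<noteq> 0" using ab Rp l a_def by auto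
      have "(a + b - 2 * l) / (2 * R l) + (a + b) / 2 * ((2 / (b - a)) / (2 * R l / (b - a))) = (b - l) / R l"
        using ne unfolding a_def by (simp add: field_simps)
      also have "\<dots> = (R l * R l) / (l * R l)" using Rp ne unfolding a_def by (simp add: field_simps)
      also have "\<dots> = R l / l" using ne by simp
      finally show ?thesis .
    qed
    ultimately show ?thesis by simp
  qed
  have "((\<lambda>l. R l / l) has_integral (F b - F a)) {a..b}"
    by (rule fundamental_theorem_of_calculus_interior[OF _ contF])
       (use ab a_def derF in \<open>auto simp: has_real_derivative_iff_has_vector_derivative[symmetric]\<close>)
  moreover have "F b - F a = pi * b / 2"
  proof -
    have "u1 b = 1" "u1 a = -1" unfolding u1_def using ab a_def by (auto simp: field_simps)
    moreover have "R a = 0" "R b = 0" unfolding R_def by auto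
    ultimately show ?thesis unfolding F_def a_def by (simp add: field_simps)
  qed
  ultimately show ?thesis unfolding R_def a_def by simp
qed

lemma F_integral:
  fixes a b :: real
  assumes "0 \<le> a" "a < b"
  shows "((\<lambda>l. sqrt ((l - a) * (b - l)) / l) has_integral (pi * (a + b) / 2 - pi * sqrt (a * b))) {a..b}"
proof (cases "a = 0")
  case True then show ?thesis using F_integral_zero[of b] assms by simp
next
  case False then show ?thesis using F_integral_pos[of a b] assms by simp
qed

definition mpc :: "real \<Rightarrow> real" where "mpc \<beta> = max 0 (1 - 1 / \<beta>)"

lemma mp_int_eq: "mp_int \<beta> f = mpc \<beta> * f 0 + (LINT l|lborel. mp_density \<beta> l * f l)"
  unfolding mp_int_def mpc_def by simp

lemma lam_basic:
  assumes "\<beta> > 0"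
  shows "0 \<le> lam_minus \<beta>" "lam_minus \<beta> < lam_plus \<beta>"
    "lam_minus \<beta> + lam_plus \<beta> = 2 * (1 + \<beta>)"
    "sqrt (lam_minus \<beta> * lam_plus \<beta>) = \<bar>1 - \<beta>\<bar>"
proof -
  have s: "sqrt \<beta> > 0" "(sqrt \<beta>)\<^sup>2 = \<beta>" using assms by auto
  show "0 \<le> lam_minus \<beta>" unfolding lam_minus_def by simp
  show "lam_minus \<beta> < lam_plus \<beta>" unfolding lam_minus_def lam_plus_def using s
    by (simp add: power2_eq_square algebra_simps)
  show "lam_minus \<beta> + lam_plus \<beta> = 2 * (1 + \<beta>)" unfolding lam_minus_def lam_plus_def using s
    by (simp add: power2_eq_square algebra_simps)
  have "lam_minus \<beta> * lam_plus \<beta> = (1 - \<beta>)\<^sup>2" unfolding lam_minus_def lam_plus_def using s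
    by (simp add: power2_eq_square algebra_simps)
  then show "sqrt (lam_minus \<beta> * lam_plus \<beta>) = \<bar>1 - \<beta>\<bar>" by simp
qed

lemma rho_in:
  assumes "lam_minus \<beta> \<le> l" "l \<le> lam_plus \<beta>"
  shows "mp_density \<beta> l = (sqrt ((l - lam_minus \<beta>) * (lam_plus \<beta> - l)) / l) / (2 * pi * \<beta>)"
  unfolding mp_density_def using assms by (simp add: max_def)

lemma rho_out:
  assumes "l \<notin> {lam_minus \<beta>..lam_plus \<beta>}"
  shows "mp_density \<beta> l = 0"
  unfolding mp_density_def using assms by (auto simp: max_def)

lemma rho_nonneg: assumes "\<beta> > 0" shows "mp_density \<beta> l \<ge> 0"
proof (cases "l \<in> {lam_minus \<beta>..lam_plus \<beta>}")
  case True
  then have "l \<ge> 0" using lam_basic[OF assms] by auto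
  then show ?thesis using True assms rho_in[of \<beta> l] by auto
next
  case False then show ?thesis by (simp add: rho_out)
qed

lemma rho_meas: "mp_density \<beta> \<in> borel_measurable lborel"
  unfolding mp_density_def by measurable

lemma rho_has_integral:
  assumes "\<beta> > 0"
  shows "(mp_density \<beta> has_integral (1 - mpc \<beta>)) UNIV"
proof -
  note lb = lam_basic[OF assms]
  have "((\<lambda>l. (sqrt ((l - lam_minus \<beta>) * (lam_plus \<beta> - l)) / l) / (2 * pi * \<beta>)) has_integral
        (pi * (lam_minus \<beta> + lam_plus \<beta>) / 2 - pi * sqrt (lam_minus \<beta> * lam_plus \<beta>)) / (2 * pi * \<beta>))
        {lam_minus \<beta>..lam_plus \<beta>}"
    by (intro has_integral_divide F_integral lb)
  then have "(mp_density \<beta> has_integral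
        (pi * (lam_minus \<beta> + lam_plus \<beta>) / 2 - pi * sqrt (lam_minus \<beta> * lam_plus \<beta>)) / (2 * pi * \<beta>))
        {lam_minus \<beta>..lam_plus \<beta>}"
    by (rule has_integral_eq[rotated]) (simp add: rho_in)
  then have "(mp_density \<beta> has_integral
        (pi * (lam_minus \<beta> + lam_plus \<beta>) / 2 - pi * sqrt (lam_minus \<beta> * lam_plus \<beta>)) / (2 * pi * \<beta>)) UNIV"
    by (rule has_integral_on_superset) (auto simp: rho_out)
  moreover have "(pi * (lam_minus \<beta> + lam_plus \<beta>) / 2 - pi * sqrt (lam_minus \<beta> * lam_plus \<beta>)) / (2 * pi * \<beta>)
      = 1 - mpc \<beta>"
    unfolding lb(3,4) mpc_def using assms by (auto simp: field_simps abs_if max_def)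
  ultimately show ?thesis by simp
qed

lemma lborel_from_HK:
  fixes f :: "real \<Rightarrow> real"
  assumes "f \<in> borel_measurable lborel" "\<And>x. 0 \<le> f x" "(f has_integral I) UNIV"
  shows "integrable lborel f" "integral\<^sup>L lborel f = I"
proof -
  have "integral\<^sup>N lborel f = I"
    using nn_integral_has_integral_lborel[of f I] assms by simp
  then show i: "integrable lborel f"
    using assms by (intro integrableI_nonneg) auto
  show "integral\<^sup>L lborel f = I"
    using has_integral_unique[OF has_integral_integral_lborel[OF i] assms(3)] .
qed

lemma rho_integrable: "\<beta> > 0 \<Longrightarrow> integrable lborel (mp_density \<beta>)"
  using lborel_from_HK(1)[OF rho_meas rho_nonneg rho_has_integral] by simp

lemma rho_integral: "\<beta> > 0 \<Longrightarrow> (LINT l|lborel. mp_density \<beta> l) = 1 - mpc \<beta>"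
  using lborel_from_HK(2)[OF rho_meas rho_nonneg rho_has_integral] by simp

lemma rho_l_integrable:
  assumes "\<beta> > 0"
  shows "integrable lborel (\<lambda>l. mp_density \<beta> l * l)"
proof (rule Bochner_Integration.integrable_bound[OF integrable_mult_left[OF rho_integrable[OF assms], of "lam_plus \<beta>"]])
  show "(\<lambda>l. mp_density \<beta> l * l) \<in> borel_measurable lborel" using rho_meas by measurable
  show "AE x in lborel. norm (mp_density \<beta> x * x) \<le> norm (mp_density \<beta> x * lam_plus \<beta>)"
  proof (rule AE_I2)
    fix l
    show "norm (mp_density \<beta> l * l) \<le> norm (mp_density \<beta> l * lam_plus \<beta>)"
    proof (cases "l \<in> {lam_minus \<beta>..lam_plus \<beta>}")
      case True
      then have "0 \<le> l" "l \<le> lam_plus \<beta>" using lam_basic[OF assms] by auto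
      then show ?thesis using rho_nonneg[OF assms, of l] by (simp add: abs_mult mult_left_mono)
    next
      case False then show ?thesis by (simp add: rho_out)
    qed
  qed
qed

lemma rho_mult_integrable:
  assumes "\<beta> > 0" "g \<in> borel_measurable lborel" "\<And>l. \<bar>g l\<bar> \<le> A + B * \<bar>l\<bar>"
  shows "integrable lborel (\<lambda>l. mp_density \<beta> l * g l)"
proof (rule Bochner_Integration.integrable_bound)
  show "integrable lborel (\<lambda>l. A * mp_density \<beta> l + B * (mp_density \<beta> l * l))"
    using rho_integrable[OF assms(1)] rho_l_integrable[OF assms(1)] by auto
  show "(\<lambda>l. mp_density \<beta> l * g l) \<in> borel_measurable lborel" using rho_meas assms(2) by measurable
  show "AE x in lborel. norm (mp_density \<beta> x * g x) \<le> norm (A * mp_density \<beta> x + B * (mp_density \<beta> x * x))"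
  proof (rule AE_I2)
    fix l
    show "norm (mp_density \<beta> l * g l) \<le> norm (A * mp_density \<beta> l + B * (mp_density \<beta> l * l))"
    proof (cases "l \<in> {lam_minus \<beta>..lam_plus \<beta>}")
      case True
      then have l: "0 \<le> l" using lam_basic[OF assms(1)] by auto
      have r: "mp_density \<beta> l \<ge> 0" by (rule rho_nonneg[OF assms(1)])
      have "norm (mp_density \<beta> l * g l) = mp_density \<beta> l * \<bar>g l\<bar>" using r by (simp add: abs_mult)
      also have "\<dots> \<le> mp_density \<beta> l * (A + B * l)" using assms(3)[of l] l r by (intro mult_left_mono) auto
      also have "\<dots> = A * mp_density \<beta> l + B * (mp_density \<beta> l * l)" by (simp add: algebra_simps)
      also have "\<dots> \<le> norm (A * mp_density \<beta> l + B * (mp_density \<beta> l * l))" by simp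
      finally show ?thesis .
    next
      case False then show ?thesis by (simp add: rho_out)
    qed
  qed
qed

lemma deriv_integral:
  fixes w K :: "real \<Rightarrow> real" and g g' :: "real \<Rightarrow> real \<Rightarrow> real"
  assumes w: "integrable lborel w"
    and gm: "\<And>a. (\<lambda>l. g a l) \<in> borel_measurable lborel"
    and g'm: "(\<lambda>l. g' a0 l) \<in> borel_measurable lborel"
    and d: "\<And>l. ((\<lambda>a. g a l) has_real_derivative g' a0 l) (at a0)"
    and lip: "\<And>a b l. \<bar>g a l - g b l\<bar> \<le> K l * \<bar>a - b\<bar>"
    and wK: "integrable lborel (\<lambda>l. w l * K l)"
    and wg: "\<And>a. integrable lborel (\<lambda>l. w l * g a l)"
  shows "((\<lambda>a. LINT l|lborel. w l * g a l) has_real_derivative (LINT l|lborel. w l * g' a0 l)) (at a0)"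
  unfolding has_field_derivative_iff tendsto_at_iff_sequentially
proof (intro allI impI)
  fix X :: "nat \<Rightarrow> real"
  assume X: "\<forall>i. X i \<in> UNIV - {a0}" "X \<longlonglongrightarrow> a0"
  have Xne: "X i - a0 \<noteq> 0" for i using X(1) by auto
  define s where "s i l = w l * ((g (X i) l - g a0 l) / (X i - a0))" for i l
  have eq: "((\<lambda>a. ((LINT l|lborel. w l * g a l) - (LINT l|lborel. w l * g a0 l)) / (a - a0)) \<circ> X)
      = (\<lambda>i. LINT l|lborel. s i l)"
  proof
    fix i
    have "(LINT l|lborel. w l * g (X i) l) - (LINT l|lborel. w l * g a0 l) = (LINT l|lborel. w l * g (X i) l - w l * g a0 l)"
      using wg by (simp add: Bochner_Integration.integral_diff)
    also have "\<dots> / (X i - a0) = (LINT l|lborel. (w l * g (X i) l - w l * g a0 l) / (X i - a0))"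
      by simp
    finally show "((\<lambda>a. ((LINT l|lborel. w l * g a l) - (LINT l|lborel. w l * g a0 l)) / (a - a0)) \<circ> X) i
       = (LINT l|lborel. s i l)"
      unfolding s_def by (simp add: algebra_simps diff_divide_distrib)
  qed
  have wm: "w \<in> borel_measurable lborel" using w by (rule borel_measurable_integrable)
  have conv: "(\<lambda>i. LINT l|lborel. s i l) \<longlonglongrightarrow> (LINT l|lborel. w l * g' a0 l)"
  proof (rule integral_dominated_convergence[where w = "\<lambda>l. norm (w l * K l)"])
    show "(\<lambda>l. w l * g' a0 l) \<in> borel_measurable lborel" using wm g'm by measurable
    show "s i \<in> borel_measurable lborel" for i unfolding s_def using wm gm[of "X i"] gm[of a0] by measurable
    show "integrable lborel (\<lambda>l. norm (w l * K l))" using wK by simp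
    show "AE l in lborel. (\<lambda>i. s i l) \<longlonglongrightarrow> w l * g' a0 l"
    proof (rule AE_I2)
      fix l
      have "((\<lambda>a. (g a l - g a0 l) / (a - a0)) \<longlongrightarrow> g' a0 l) (at a0)"
        using d[of l] unfolding has_field_derivative_iff .
      then have "((\<lambda>a. (g a l - g a0 l) / (a - a0)) \<circ> X) \<longlonglongrightarrow> g' a0 l"
        using X unfolding tendsto_at_iff_sequentially by blast
      then show "(\<lambda>i. s i l) \<longlonglongrightarrow> w l * g' a0 l"
        unfolding s_def by (intro tendsto_mult_left) (simp add: o_def)
    qed
    show "AE l in lborel. norm (s i l) \<le> norm (w l * K l)" for i
    proof (rule AE_I2)
      fix l
      have "\<bar>(g (X i) l - g a0 l) / (X i - a0)\<bar> \<le> K l"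
        using lip[of "X i" l a0] Xne[of i] by (simp add: abs_divide divide_le_eq)
      then have q: "\<bar>w l\<bar> * \<bar>(g (X i) l - g a0 l) / (X i - a0)\<bar> \<le> \<bar>w l\<bar> * K l"
        by (intro mult_left_mono) auto
      have "norm (s i l) = \<bar>w l\<bar> * \<bar>(g (X i) l - g a0 l) / (X i - a0)\<bar>"
        unfolding s_def real_norm_def by (rule abs_mult)
      also have "\<dots> \<le> \<bar>w l\<bar> * K l" by (rule q)
      also have "\<dots> \<le> \<bar>w l\<bar> * \<bar>K l\<bar>" by (intro mult_left_mono) auto
      also have "\<dots> = norm (w l * K l)" unfolding real_norm_def by (rule abs_mult[symmetric])
      finally show "norm (s i l) \<le> norm (w l * K l)" .
    qed
  qed
  show "((\<lambda>a. ((LINT l|lborel. w l * g a l) - (LINT l|lborel. w l * g a0 l)) / (a - a0)) \<circ> X)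
        \<longlonglongrightarrow> (LINT l|lborel. w l * g' a0 l)"
    by (subst eq) (rule conv)
qed

lemma L_cont: "M > 0 \<Longrightarrow> continuous_on UNIV (\<lambda>s. ln (mgf_YM M s))"
  using L_deriv DERIV_isCont by (metis continuous_at_imp_continuous_on)

lemma L_comp_meas: "M > 0 \<Longrightarrow> (\<lambda>l. ln (mgf_YM M (a * (l - x)))) \<in> borel_measurable lborel"
proof -
  assume M: "M > 0"
  have c: "continuous_on UNIV (\<lambda>l. a * (l - x))" by (intro continuous_intros)
  have "continuous_on UNIV (\<lambda>l. ln (mgf_YM M (a * (l - x))))"
    by (rule continuous_on_compose2[OF L_cont[OF M] c]) simp
  then show ?thesis using borel_measurable_continuous_onI by simp
qed

lemma psi_eq: "psi \<beta> x M = (\<lambda>\<alpha>. mpc \<beta> * ln (mgf_YM M (\<alpha> * (0 - x)))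
   + (LINT l|lborel. mp_density \<beta> l * ln (mgf_YM M (\<alpha> * (l - x)))))"
  unfolding psi_def mp_int_eq by auto

lemma psi_integrable:
  assumes "\<beta> > 0" "M > 0"
  shows "integrable lborel (\<lambda>l. mp_density \<beta> l * ln (mgf_YM M (a * (l - x))))"
proof (rule rho_mult_integrable[OF assms(1) L_comp_meas[OF assms(2)]])
  fix l
  have "\<bar>ln (mgf_YM M (a * (l - x)))\<bar> \<le> M * \<bar>a * (l - x)\<bar>" by (rule L_abs_bound[OF assms(2)])
  also have "\<dots> \<le> M * (\<bar>a\<bar> * (\<bar>x\<bar> + \<bar>l\<bar>))"
  proof -
    have "\<bar>l - x\<bar> \<le> \<bar>x\<bar> + \<bar>l\<bar>" using abs_triangle_ineq4[of l x] by simp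
    then have "\<bar>a\<bar> * \<bar>l - x\<bar> \<le> \<bar>a\<bar> * (\<bar>x\<bar> + \<bar>l\<bar>)" by (intro mult_left_mono) auto
    then have "\<bar>a * (l - x)\<bar> \<le> \<bar>a\<bar> * (\<bar>x\<bar> + \<bar>l\<bar>)" by (simp only: abs_mult)
    then show ?thesis by (rule mult_left_mono) (use assms(2) in simp)
  qed
  finally show "\<bar>ln (mgf_YM M (a * (l - x)))\<bar> \<le> M * \<bar>a\<bar> * \<bar>x\<bar> + M * \<bar>a\<bar> * \<bar>l\<bar>"
    by (simp add: algebra_simps)
qed

lemma psi_deriv:
  assumes "\<beta> > 0" "M > 0"
  shows "\<exists>D. (psi \<beta> x M has_real_derivative D) (at \<alpha>)"
proof -
  have L: "\<And>s. ((\<lambda>s. ln (mgf_YM M s)) has_real_derivative Ld M s) (at s)" by (rule L_deriv[OF assms(2)])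
  have d1: "((\<lambda>a. ln (mgf_YM M (a * (l - x)))) has_real_derivative Ld M (\<alpha> * (l - x)) * (l - x)) (at \<alpha>)" for l
  proof -
    have i: "((\<lambda>a. a * (l - x)) has_real_derivative (l - x)) (at \<alpha>)"
      by (rule derivative_eq_intros refl)+ simp
    show ?thesis using DERIV_chain2[OF L i] .
  qed
  have d2: "((\<lambda>a. LINT l|lborel. mp_density \<beta> l * ln (mgf_YM M (a * (l - x)))) has_real_derivative
      (LINT l|lborel. mp_density \<beta> l * (Ld M (\<alpha> * (l - x)) * (l - x)))) (at \<alpha>)"
  proof (rule deriv_integral[where K = "\<lambda>l. M * \<bar>l - x\<bar>"])
    show "integrable lborel (mp_density \<beta>)" by (rule rho_integrable[OF assms(1)])
    show "(\<lambda>l. ln (mgf_YM M (a * (l - x)))) \<in> borel_measurable lborel" for a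
      by (rule L_comp_meas[OF assms(2)])
    have c: "continuous_on UNIV (\<lambda>l. \<alpha> * (l - x))" by (intro continuous_intros)
    have "continuous_on UNIV (\<lambda>l. Ld M (\<alpha> * (l - x)))"
      by (rule continuous_on_compose2[OF Ld_cont[OF assms(2)] c]) simp
    then have "continuous_on UNIV (\<lambda>l. Ld M (\<alpha> * (l - x)) * (l - x))"
      by (intro continuous_intros)
    then show "(\<lambda>l. Ld M (\<alpha> * (l - x)) * (l - x)) \<in> borel_measurable lborel"
      using borel_measurable_continuous_onI by simp
    show "((\<lambda>a. ln (mgf_YM M (a * (l - x)))) has_real_derivative Ld M (\<alpha> * (l - x)) * (l - x)) (at \<alpha>)" for l
      by (rule d1)
    show "\<bar>ln (mgf_YM M (a * (l - x))) - ln (mgf_YM M (b * (l - x)))\<bar> \<le> M * \<bar>l - x\<bar> * \<bar>a - b\<bar>" for a b l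
    proof -
      have "\<bar>ln (mgf_YM M (a * (l - x))) - ln (mgf_YM M (b * (l - x)))\<bar> \<le> M * \<bar>a * (l - x) - b * (l - x)\<bar>"
        by (rule L_lip[OF assms(2)])
      also have "\<bar>a * (l - x) - b * (l - x)\<bar> = \<bar>l - x\<bar> * \<bar>a - b\<bar>"
        by (simp add: abs_mult[symmetric] algebra_simps)
      finally show ?thesis by (simp add: mult.assoc)
    qed
    show "integrable lborel (\<lambda>l. mp_density \<beta> l * (M * \<bar>l - x\<bar>))"
    proof (rule rho_mult_integrable[OF assms(1)])
      show "(\<lambda>l. M * \<bar>l - x\<bar>) \<in> borel_measurable lborel" by measurable
      fix l show "\<bar>M * \<bar>l - x\<bar>\<bar> \<le> M * \<bar>x\<bar> + M * \<bar>l\<bar>"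
        using assms(2) by (simp add: abs_mult ring_distribs[symmetric] abs_triangle_ineq4 mult_left_mono)
    qed
    show "integrable lborel (\<lambda>l. mp_density \<beta> l * ln (mgf_YM M (a * (l - x))))" for a
      by (rule psi_integrable[OF assms])
  qed
  have d0: "((\<lambda>a. mpc \<beta> * ln (mgf_YM M (a * (0 - x)))) has_real_derivative
      mpc \<beta> * (Ld M (\<alpha> * (0 - x)) * (0 - x))) (at \<alpha>)"
    by (rule DERIV_cmult[OF d1])
  show ?thesis unfolding psi_eq using DERIV_add[OF d0 d2] by blast
qed

lemma mpc_nonneg: "mpc \<beta> \<ge> 0" unfolding mpc_def by simp

lemma psi_zero: "M > 0 \<Longrightarrow> psi \<beta> x M 0 = 0"
  unfolding psi_def mp_int_eq using L_zero[of M] by simp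

lemma lam_bar_eq: "lam_bar \<beta> = (LINT l|lborel. mp_density \<beta> l * l)"
  unfolding lam_bar_def mp_int_eq by simp

lemma rho_meas_int:
  assumes "\<beta> > 0" "g \<in> borel_measurable lborel" "\<And>l. \<bar>g l\<bar> \<le> A + B * \<bar>l\<bar>"
  shows "integrable lborel (\<lambda>l. mp_density \<beta> l * g l)"
  using rho_mult_integrable[OF assms] .

lemma maxp_int: "\<beta> > 0 \<Longrightarrow> integrable lborel (\<lambda>l. mp_density \<beta> l * max (l - x) 0)"
  by (rule rho_mult_integrable[where A = "\<bar>x\<bar>" and B = 1]) auto

lemma maxm_int: "\<beta> > 0 \<Longrightarrow> integrable lborel (\<lambda>l. mp_density \<beta> l * max (x - l) 0)"
  by (rule rho_mult_integrable[where A = "\<bar>x\<bar>" and B = 1]) auto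

lemma rho_lin3:
  assumes "\<beta> > 0"
  shows "(LINT l|lborel. mp_density \<beta> l * (u * max (l - x) 0 + v * max (x - l) 0 + w))
    = u * (LINT l|lborel. mp_density \<beta> l * max (l - x) 0) + v * (LINT l|lborel. mp_density \<beta> l * max (x - l) 0)
      + w * (1 - mpc \<beta>)"
proof -
  have e: "(\<lambda>l. mp_density \<beta> l * (u * max (l - x) 0 + v * max (x - l) 0 + w)) =
    (\<lambda>l. u * (mp_density \<beta> l * max (l - x) 0) + v * (mp_density \<beta> l * max (x - l) 0) + w * mp_density \<beta> l)"
    by (auto simp: algebra_simps)
  show ?thesis unfolding e
    using maxp_int[OF assms, of x] maxm_int[OF assms, of x] rho_integrable[OF assms] rho_integral[OF assms]
    by (simp add: Bochner_Integration.integral_add)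
qed

lemma lin3_integrable:
  assumes "\<beta> > 0"
  shows "integrable lborel (\<lambda>l. mp_density \<beta> l * (u * max (l - x) 0 + v * max (x - l) 0 + w))"
proof -
  have e: "(\<lambda>l. mp_density \<beta> l * (u * max (l - x) 0 + v * max (x - l) 0 + w)) =
    (\<lambda>l. u * (mp_density \<beta> l * max (l - x) 0) + v * (mp_density \<beta> l * max (x - l) 0) + w * mp_density \<beta> l)"
    by (auto simp: algebra_simps)
  show ?thesis unfolding e
    using maxp_int[OF assms, of x] maxm_int[OF assms, of x] rho_integrable[OF assms] by simp
qed

lemma rho_lin2:
  assumes "\<beta> > 0"
  shows "(LINT l|lborel. mp_density \<beta> l * (u * l + w)) = u * (LINT l|lborel. mp_density \<beta> l * l) + w * (1 - mpc \<beta>)"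
proof -
  have e: "(\<lambda>l. mp_density \<beta> l * (u * l + w)) = (\<lambda>l. u * (mp_density \<beta> l * l) + w * mp_density \<beta> l)"
    by (auto simp: algebra_simps)
  show ?thesis unfolding e
    using rho_l_integrable[OF assms] rho_integrable[OF assms] rho_integral[OF assms]
    by (simp add: Bochner_Integration.integral_add)
qed

lemma psi_ge_integral:
  assumes "\<beta> > 0" "M > 0" "\<And>s. h s \<le> ln (mgf_YM M s)"
    "integrable lborel (\<lambda>l. mp_density \<beta> l * h (\<alpha> * (l - x)))"
  shows "mpc \<beta> * h (\<alpha> * (0 - x)) + (LINT l|lborel. mp_density \<beta> l * h (\<alpha> * (l - x))) \<le> psi \<beta> x M \<alpha>"
proof -
  have "mpc \<beta> * h (\<alpha> * (0 - x)) \<le> mpc \<beta> * ln (mgf_YM M (\<alpha> * (0 - x)))"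
    using assms(3) mpc_nonneg by (intro mult_left_mono) auto
  moreover have "(LINT l|lborel. mp_density \<beta> l * h (\<alpha> * (l - x))) \<le> (LINT l|lborel. mp_density \<beta> l * ln (mgf_YM M (\<alpha> * (l - x))))"
    using assms(4) psi_integrable[OF assms(1,2)] 
    by (intro integral_mono) (auto intro!: mult_left_mono assms(3) rho_nonneg[OF assms(1)])
  ultimately show ?thesis unfolding psi_eq by simp
qed

lemma psi_jensen:
  assumes "\<beta> > 0" "M > 0"
  shows "\<alpha> * mY M * (lam_bar \<beta> - x) \<le> psi \<beta> x M \<alpha>"
proof -
  let ?m = "mY M"
  have i: "integrable lborel (\<lambda>l. mp_density \<beta> l * (\<alpha> * (l - x) * ?m))"
  proof -
    have "integrable lborel (\<lambda>l. (\<alpha> * ?m) * (mp_density \<beta> l * l) - (\<alpha> * ?m * x) * mp_density \<beta> l)"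
      using rho_l_integrable[OF assms(1)] rho_integrable[OF assms(1)] by auto
    moreover have "(\<lambda>l. (\<alpha> * ?m) * (mp_density \<beta> l * l) - (\<alpha> * ?m * x) * mp_density \<beta> l) =
       (\<lambda>l. mp_density \<beta> l * (\<alpha> * (l - x) * ?m))" by (auto simp: algebra_simps)
    ultimately show ?thesis by simp
  qed
  have "mpc \<beta> * (\<alpha> * (0 - x) * ?m) + (LINT l|lborel. mp_density \<beta> l * (\<alpha> * (l - x) * ?m)) \<le> psi \<beta> x M \<alpha>"
    using psi_ge_integral[OF assms, of "\<lambda>s. s * ?m", OF L_jensen[OF assms(2)] i] by simp
  moreover have "(LINT l|lborel. mp_density \<beta> l * (\<alpha> * (l - x) * ?m))
      = (LINT l|lborel. mp_density \<beta> l * ((\<alpha> * ?m) * l + (- (\<alpha> * ?m * x))))"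
    by (rule Bochner_Integration.integral_cong) (auto simp: algebra_simps)
  moreover have "\<dots> = (\<alpha> * ?m) * (LINT l|lborel. mp_density \<beta> l * l) + (- (\<alpha> * ?m * x)) * (1 - mpc \<beta>)"
    by (rule rho_lin2[OF assms(1)])
  ultimately show ?thesis unfolding lam_bar_eq by (simp add: algebra_simps)
qed

definition Bf :: "real \<Rightarrow> real \<Rightarrow> real" where
  "Bf M s = (M - 1) * max s 0 - max (- s) 0 - 2 * M"

lemma L_ge_Bf: assumes "M \<ge> 1" shows "Bf M s \<le> ln (mgf_YM M s)"
proof (cases "s \<ge> 0")
  case True then show ?thesis unfolding Bf_def using L_lower_pos[OF assms True] by (simp add: max_def mult.commute)
next
  case False
  have M: "M > 0" using assms by simp
  have "s * (1 - mY M) \<le> 0" using mY_bounds[OF M] False by (intro mult_nonpos_nonneg) auto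
  then have "s \<le> s * mY M" by (simp add: algebra_simps)
  moreover have "Bf M s = s - 2 * M" unfolding Bf_def using False by (simp add: max_def)
  ultimately show ?thesis using L_jensen[OF M, of s] assms by linarith
qed

lemma Bf_pos:
  assumes "a \<ge> 0"
  shows "Bf M (a * (l - x)) = (a * (M - 1)) * max (l - x) 0 + (- a) * max (x - l) 0 + (- 2 * M)"
proof (cases "l \<le> x")
  case True
  have "a * (l - x) \<le> 0" using assms True by (simp add: mult_nonneg_nonpos)
  then have m: "max (a * (l - x)) 0 = 0" "max (- (a * (l - x))) 0 = - (a * (l - x))"
     "max (l - x) 0 = 0" "max (x - l) 0 = x - l" using True by (simp_all add: max_def)
  show ?thesis unfolding Bf_def m by (simp add: algebra_simps)
next
  case False
  have "a * (l - x) \<ge> 0" using assms False by simp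
  then have m: "max (a * (l - x)) 0 = a * (l - x)" "max (- (a * (l - x))) 0 = 0"
     "max (l - x) 0 = l - x" "max (x - l) 0 = 0" using False by (simp_all add: max_def)
  show ?thesis unfolding Bf_def m by (simp add: algebra_simps)
qed

lemma Bf_neg:
  assumes "\<alpha> \<le> 0"
  shows "Bf M (\<alpha> * (l - x)) = \<alpha> * max (l - x) 0 + (- \<alpha> * (M - 1)) * max (x - l) 0 + (- 2 * M)"
proof (cases "l \<le> x")
  case True
  have "\<alpha> * (l - x) \<ge> 0" using assms True by (simp add: mult_nonpos_nonpos)
  then have m: "max (\<alpha> * (l - x)) 0 = \<alpha> * (l - x)" "max (- (\<alpha> * (l - x))) 0 = 0"
     "max (l - x) 0 = 0" "max (x - l) 0 = x - l" using True by (simp_all add: max_def)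
  show ?thesis unfolding Bf_def m by (simp add: algebra_simps)
next
  case False
  have "\<alpha> * (l - x) \<le> 0" using assms False by (simp add: mult_nonpos_nonneg)
  then have m: "max (\<alpha> * (l - x)) 0 = 0" "max (- (\<alpha> * (l - x))) 0 = - (\<alpha> * (l - x))"
     "max (l - x) 0 = l - x" "max (x - l) 0 = 0" using False by (simp_all add: max_def)
  show ?thesis unfolding Bf_def m by (simp add: algebra_simps)
qed

definition Pp :: "real \<Rightarrow> real \<Rightarrow> real" where
  "Pp \<beta> x = (LINT l|lborel. mp_density \<beta> l * max (l - x) 0)"
definition Nn :: "real \<Rightarrow> real \<Rightarrow> real" where
  "Nn \<beta> x = (LINT l|lborel. mp_density \<beta> l * max (x - l) 0)"

lemma psi_lower_pos:
  assumes "\<beta> > 0" "M \<ge> 1" "\<alpha> \<ge> 0" "x > 0"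
  shows "\<alpha> * ((M - 1) * Pp \<beta> x - Nn \<beta> x - mpc \<beta> * x) - 2 * M \<le> psi \<beta> x M \<alpha>"
proof -
  have M: "M > 0" using assms by simp
  have e: "\<And>l. Bf M (\<alpha> * (l - x)) = (\<alpha> * (M - 1)) * max (l - x) 0 + (- \<alpha>) * max (x - l) 0 + (- 2 * M)"
    by (rule Bf_pos[OF assms(3)])
  have i: "integrable lborel (\<lambda>l. mp_density \<beta> l * Bf M (\<alpha> * (l - x)))"
    unfolding e by (rule lin3_integrable[OF assms(1)])
  have "mpc \<beta> * Bf M (\<alpha> * (0 - x)) + (LINT l|lborel. mp_density \<beta> l * Bf M (\<alpha> * (l - x))) \<le> psi \<beta> x M \<alpha>"
    by (rule psi_ge_integral[OF assms(1) M L_ge_Bf[OF assms(2)] i])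
  moreover have "(LINT l|lborel. mp_density \<beta> l * Bf M (\<alpha> * (l - x)))
     = (\<alpha> * (M - 1)) * Pp \<beta> x + (- \<alpha>) * Nn \<beta> x + (- 2 * M) * (1 - mpc \<beta>)"
    unfolding e rho_lin3[OF assms(1)] Pp_def Nn_def ..
  moreover have "Bf M (\<alpha> * (0 - x)) = - \<alpha> * x - 2 * M"
    unfolding e using assms by simp
  ultimately have A: "mpc \<beta> * (- \<alpha> * x - 2 * M) + ((\<alpha> * (M - 1)) * Pp \<beta> x + (- \<alpha>) * Nn \<beta> x + (- 2 * M) * (1 - mpc \<beta>)) \<le> psi \<beta> x M \<alpha>"
    by simp
  have "\<alpha> * ((M - 1) * Pp \<beta> x - Nn \<beta> x - mpc \<beta> * x) - 2 * M =
    mpc \<beta> * (- \<alpha> * x - 2 * M) + ((\<alpha> * (M - 1)) * Pp \<beta> x + (- \<alpha>) * Nn \<beta> x + (- 2 * M) * (1 - mpc \<beta>))"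
    by (simp add: algebra_simps)
  with A show ?thesis by linarith
qed

lemma psi_lower_neg:
  assumes "\<beta> > 0" "M \<ge> 1" "\<alpha> \<le> 0" "x > 0"
  shows "(- \<alpha>) * ((M - 1) * (Nn \<beta> x + mpc \<beta> * x) - Pp \<beta> x) - 2 * M \<le> psi \<beta> x M \<alpha>"
proof -
  have M: "M > 0" using assms by simp
  have a: "- \<alpha> \<ge> 0" using assms by simp
  have e: "\<And>l. Bf M (\<alpha> * (l - x)) = \<alpha> * max (l - x) 0 + (- \<alpha> * (M - 1)) * max (x - l) 0 + (- 2 * M)"
    by (rule Bf_neg[OF assms(3)])
  have i: "integrable lborel (\<lambda>l. mp_density \<beta> l * Bf M (\<alpha> * (l - x)))"
    unfolding e by (rule lin3_integrable[OF assms(1)])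
  have "mpc \<beta> * Bf M (\<alpha> * (0 - x)) + (LINT l|lborel. mp_density \<beta> l * Bf M (\<alpha> * (l - x))) \<le> psi \<beta> x M \<alpha>"
    by (rule psi_ge_integral[OF assms(1) M L_ge_Bf[OF assms(2)] i])
  moreover have "(LINT l|lborel. mp_density \<beta> l * Bf M (\<alpha> * (l - x)))
     = \<alpha> * Pp \<beta> x + (- \<alpha> * (M - 1)) * Nn \<beta> x + (- 2 * M) * (1 - mpc \<beta>)"
    unfolding e rho_lin3[OF assms(1)] Pp_def Nn_def ..
  moreover have "Bf M (\<alpha> * (0 - x)) = (- \<alpha> * (M - 1)) * x - 2 * M"
    unfolding e using assms by simp
  ultimately have A: "mpc \<beta> * ((- \<alpha> * (M - 1)) * x - 2 * M) + (\<alpha> * Pp \<beta> x + (- \<alpha> * (M - 1)) * Nn \<beta> x + (- 2 * M) * (1 - mpc \<beta>)) \<le> psi \<beta> x M \<alpha>"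
    by simp
  have "(- \<alpha>) * ((M - 1) * (Nn \<beta> x + mpc \<beta> * x) - Pp \<beta> x) - 2 * M =
    mpc \<beta> * ((- \<alpha> * (M - 1)) * x - 2 * M) + (\<alpha> * Pp \<beta> x + (- \<alpha> * (M - 1)) * Nn \<beta> x + (- 2 * M) * (1 - mpc \<beta>))"
    by (simp add: algebra_simps)
  with A show ?thesis by linarith
qed

lemma mY_lim: "(mY \<longlongrightarrow> 1) at_top"
  unfolding mY_def[abs_def] by real_asymp

lemma rho_lower:
  assumes "\<beta> > 0" "lam_minus \<beta> < u" "u \<le> l" "l \<le> v" "v < lam_plus \<beta>"
  shows "sqrt ((u - lam_minus \<beta>) * (lam_plus \<beta> - v)) / lam_plus \<beta> / (2 * pi * \<beta>) \<le> mp_density \<beta> l"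
proof -
  note lb = lam_basic[OF assms(1)]
  have l: "lam_minus \<beta> \<le> l" "l \<le> lam_plus \<beta>" "l > 0" using assms lb by auto
  have "sqrt ((u - lam_minus \<beta>) * (lam_plus \<beta> - v)) \<le> sqrt ((l - lam_minus \<beta>) * (lam_plus \<beta> - l))"
    using assms by (intro real_sqrt_le_mono mult_mono) auto
  then have "sqrt ((u - lam_minus \<beta>) * (lam_plus \<beta> - v)) / lam_plus \<beta> \<le> sqrt ((l - lam_minus \<beta>) * (lam_plus \<beta> - l)) / l"
    using l by (intro frac_le) auto
  then have "sqrt ((u - lam_minus \<beta>) * (lam_plus \<beta> - v)) / lam_plus \<beta> / (2 * pi * \<beta>)
     \<le> sqrt ((l - lam_minus \<beta>) * (lam_plus \<beta> - l)) / l / (2 * pi * \<beta>)"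
    using assms(1) by (intro divide_right_mono) auto
  then show ?thesis using rho_in[OF l(1,2)] by simp
qed

lemma rho_int_pos:
  assumes b: "\<beta> > 0" and uv: "lam_minus \<beta> < u" "u < v" "v < lam_plus \<beta>"
    and g: "g \<in> borel_measurable lborel" "\<And>l. \<bar>g l\<bar> \<le> A + B * \<bar>l\<bar>" "\<And>l. 0 \<le> g l"
    "\<And>l. u \<le> l \<Longrightarrow> l \<le> v \<Longrightarrow> \<eta> \<le> g l" and eta: "\<eta> > 0"
  shows "(LINT l|lborel. mp_density \<beta> l * g l) > 0"
proof -
  define \<delta> where "\<delta> = sqrt ((u - lam_minus \<beta>) * (lam_plus \<beta> - v)) / lam_plus \<beta> / (2 * pi * \<beta>)"
  have lb: "lam_plus \<beta> > 0" using lam_basic[OF b] by linarith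
  have dpos: "\<delta> > 0" unfolding \<delta>_def using uv b lb by auto
  have cc: "continuous_on {u..v} (\<lambda>_. \<delta> * \<eta>)" by simp
  have int1: "integrable lborel (\<lambda>l. indicator {u..v} l *\<^sub>R (\<delta> * \<eta>))"
    using borel_integrable_atLeastAtMost'[OF cc] unfolding set_integrable_def .
  have val: "(LINT l|lborel. indicator {u..v} l *\<^sub>R (\<delta> * \<eta>)) = \<delta> * \<eta> * v - \<delta> * \<eta> * u"
  proof (rule integral_FTC_atLeastAtMost[OF _ _ cc])
    show "u \<le> v" using uv by simp
    fix x :: real
    show "((\<lambda>x. \<delta> * \<eta> * x) has_vector_derivative \<delta> * \<eta>) (at x within {u..v})"
      unfolding has_real_derivative_iff_has_vector_derivative[symmetric]
      by (rule derivative_eq_intros refl)+ simp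
  qed
  have "(LINT l|lborel. indicator {u..v} l *\<^sub>R (\<delta> * \<eta>)) \<le> (LINT l|lborel. mp_density \<beta> l * g l)"
  proof (rule integral_mono[OF int1 rho_mult_integrable[OF b g(1,2)]])
    fix l
    show "indicator {u..v} l *\<^sub>R (\<delta> * \<eta>) \<le> mp_density \<beta> l * g l"
    proof (cases "l \<in> {u..v}")
      case True
      have "\<delta> \<le> mp_density \<beta> l" unfolding \<delta>_def using True uv by (intro rho_lower[OF b]) auto
      moreover have "\<eta> \<le> g l" using True g(4) by auto
      ultimately have "\<delta> * \<eta> \<le> mp_density \<beta> l * g l"
        using dpos eta by (intro mult_mono) auto
      then show ?thesis using True by simp
    next
      case False
      then show ?thesis using rho_nonneg[OF b, of l] g(3)[of l] by simp
    qed
  qed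
  moreover have "\<delta> * \<eta> * v - \<delta> * \<eta> * u > 0"
    using dpos eta uv by (simp add: algebra_simps)
  ultimately show ?thesis using val by linarith
qed

lemma Pp_pos:
  assumes b: "\<beta> > 0" and x: "x < lam_plus \<beta>"
  shows "Pp \<beta> x > 0"
proof -
  define m where "m = max x (lam_minus \<beta>)"
  have mb: "m < lam_plus \<beta>" "x \<le> m" "lam_minus \<beta> \<le> m"
    unfolding m_def using x lam_basic[OF b] by auto
  define u where "u = m + (lam_plus \<beta> - m) / 3"
  define v where "v = m + 2 * (lam_plus \<beta> - m) / 3"
  have uv: "lam_minus \<beta> < u" "u < v" "v < lam_plus \<beta>" "x < u"
    using mb unfolding u_def v_def by (auto simp: field_simps)
  show ?thesis unfolding Pp_def
  proof (rule rho_int_pos[OF b uv(1,2,3), where A = "\<bar>x\<bar>" and B = 1 and \<eta> = "u - x"])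
    show "(\<lambda>l. max (l - x) 0) \<in> borel_measurable lborel" by measurable
  qed (use uv in auto)
qed

lemma lam_t_minus_nonneg: "\<beta> > 0 \<Longrightarrow> lam_t_minus \<beta> \<ge> 0"
  unfolding lam_t_minus_def using lam_basic[of \<beta>] by auto

lemma Q_pos:
  assumes b: "\<beta> > 0" and x: "lam_t_minus \<beta> < x" "x < lam_plus \<beta>"
  shows "Nn \<beta> x + mpc \<beta> * x > 0"
proof (cases "\<beta> > 1")
  case True
  have x0: "x > 0" using x lam_t_minus_nonneg[OF b] by linarith
  have "mpc \<beta> > 0" unfolding mpc_def using True by (simp add: field_simps)
  moreover have "Nn \<beta> x \<ge> 0" unfolding Nn_def
    by (intro Bochner_Integration.integral_nonneg mult_nonneg_nonneg rho_nonneg[OF b]) auto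
  ultimately show ?thesis using x0 by (simp add: add_nonneg_pos)
next
  case False
  have xa: "lam_minus \<beta> < x"
  proof (cases "\<beta> = 1")
    case True
    then have "lam_minus \<beta> = 0" unfolding lam_minus_def by simp
    then show ?thesis using x True unfolding lam_t_minus_def by simp
  next
    case False
    then have "\<beta> < 1" using \<open>\<not> \<beta> > 1\<close> by simp
    then show ?thesis using x unfolding lam_t_minus_def by simp
  qed
  have c0: "mpc \<beta> = 0" unfolding mpc_def using False b by (simp add: field_simps)
  define m where "m = min x (lam_plus \<beta>)"
  have mb: "lam_minus \<beta> < m" "m \<le> x" "m \<le> lam_plus \<beta>"
    unfolding m_def using xa lam_basic[OF b] by auto
  define u where "u = lam_minus \<beta> + (m - lam_minus \<beta>) / 3"
  define v where "v = lam_minus \<beta> + 2 * (m - lam_minus \<beta>) / 3"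
  have uv: "lam_minus \<beta> < u" "u < v" "v < lam_plus \<beta>" "v < x"
    using mb unfolding u_def v_def by (auto simp: field_simps)
  have "Nn \<beta> x > 0" unfolding Nn_def
  proof (rule rho_int_pos[OF b uv(1,2,3), where A = "\<bar>x\<bar>" and B = 1 and \<eta> = "x - v"])
    show "(\<lambda>l. max (x - l) 0) \<in> borel_measurable lborel" by measurable
  qed (use uv in auto)
  then show ?thesis using c0 by simp
qed

lemma psi_cont: "\<beta> > 0 \<Longrightarrow> M > 0 \<Longrightarrow> continuous_on UNIV (psi \<beta> x M)"
  using psi_deriv[of \<beta> M x] by (metis DERIV_isCont continuous_at_imp_continuous_on)

lemma crit:
  assumes "(psi \<beta> x M has_real_derivative D) (at \<gamma>)" "\<And>\<alpha>. psi \<beta> x M \<gamma> - t * \<gamma> \<le> psi \<beta> x M \<alpha> - t * \<alpha>"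
  shows "D = t"
proof -
  have "((\<lambda>\<alpha>. psi \<beta> x M \<alpha> - t * \<alpha>) has_real_derivative D - t) (at \<gamma>)"
    using DERIV_diff[OF assms(1) DERIV_cmult_Id[of t]] by simp
  then have "D - t = 0"
    by (rule DERIV_local_min[where d = 1]) (use assms(2) in auto)
  then show ?thesis by simp
qed

lemma psi_star_ge: "ereal (\<alpha> * t - psi \<beta> x M \<alpha>) \<le> psi_star \<beta> x M t"
  unfolding psi_star_def by (rule SUP_upper) simp

lemma psi_star_attained:
  assumes "\<And>\<alpha>. \<alpha> * t - psi \<beta> x M \<alpha> \<le> \<gamma> * t - psi \<beta> x M \<gamma>"
  shows "psi_star \<beta> x M t = ereal (\<gamma> * t - psi \<beta> x M \<gamma>)"
proof (rule antisym)
  show "psi_star \<beta> x M t \<le> ereal (\<gamma> * t - psi \<beta> x M \<gamma>)"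
    unfolding psi_star_def by (rule SUP_least) (use assms in simp)
  show "ereal (\<gamma> * t - psi \<beta> x M \<gamma>) \<le> psi_star \<beta> x M t" by (rule psi_star_ge)
qed

lemma eventually_lin:
  fixes P C :: real
  assumes "P > 0"
  shows "eventually (\<lambda>M. (M - 1) * P > C) at_top"
  using eventually_gt_at_top[of "C / P + 1"]
proof (rule eventually_mono)
  fix M assume "C / P + 1 < M"
  then have "C / P < M - 1" by simp
  then show "(M - 1) * P > C" using assms by (simp add: pos_divide_less_eq)
qed

lemma minimizer:
  assumes b: "\<beta> > 0" and M: "M \<ge> 1" and x: "x > 0"
    and k1: "(M - 1) * Pp \<beta> x - Nn \<beta> x - mpc \<beta> * x - t > 0"
    and k2: "(M - 1) * (Nn \<beta> x + mpc \<beta> * x) - Pp \<beta> x + t > 0"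
  shows "\<exists>\<gamma>. \<forall>\<alpha>. psi \<beta> x M \<gamma> - t * \<gamma> \<le> psi \<beta> x M \<alpha> - t * \<alpha>"
proof -
  define f where "f \<alpha> = psi \<beta> x M \<alpha> - t * \<alpha>" for \<alpha>
  define K1 where "K1 = (M - 1) * Pp \<beta> x - Nn \<beta> x - mpc \<beta> * x - t"
  define K2 where "K2 = (M - 1) * (Nn \<beta> x + mpc \<beta> * x) - Pp \<beta> x + t"
  have K: "K1 > 0" "K2 > 0" using k1 k2 unfolding K1_def K2_def by auto
  define R1 where "R1 = 2 * M / K1 + 1"
  define R2 where "R2 = 2 * M / K2 + 1"
  have "2 * M / K1 > 0" "2 * M / K2 > 0" using K M by simp_all
  then have R: "R1 > 0" "R2 > 0" unfolding R1_def R2_def by simp_all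
  have M0: "M > 0" using M by simp
  have cont: "continuous_on {- R2..R1} f"
    unfolding f_def using psi_cont[OF b M0, of x]
    by (intro continuous_intros) (auto intro: continuous_on_subset)
  obtain \<gamma> where g: "\<gamma> \<in> {- R2..R1}" "\<And>y. y \<in> {- R2..R1} \<Longrightarrow> f \<gamma> \<le> f y"
    using continuous_attains_inf[OF compact_Icc _ cont] R by fastforce
  have f0: "f 0 = 0" unfolding f_def using psi_zero[OF M0] by simp
  have fg: "f \<gamma> \<le> 0" using g(2)[of 0] R f0 by simp
  have "f \<gamma> \<le> f \<alpha>" for \<alpha>
  proof -
    consider "\<alpha> \<in> {- R2..R1}" | "\<alpha> > R1" | "\<alpha> < - R2" by force
    then show ?thesis
    proof cases
      case 1 then show ?thesis by (rule g(2))
    next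
      case 2
      then have a0: "\<alpha> \<ge> 0" using R by simp
      have "\<alpha> * ((M - 1) * Pp \<beta> x - Nn \<beta> x - mpc \<beta> * x) - 2 * M \<le> psi \<beta> x M \<alpha>"
        by (rule psi_lower_pos[OF b M a0 x])
      then have fl: "\<alpha> * K1 - 2 * M \<le> f \<alpha>" unfolding f_def K1_def by (simp add: algebra_simps)
      have "R1 * K1 < \<alpha> * K1" using 2 K by (intro mult_strict_right_mono) auto
      moreover have "R1 * K1 = 2 * M + K1" unfolding R1_def using K by (simp add: field_simps)
      ultimately have "f \<alpha> > 0" using fl K by linarith
      then show ?thesis using fg by simp
    next
      case 3
      then have a0: "\<alpha> \<le> 0" using R by simp
      have "(- \<alpha>) * ((M - 1) * (Nn \<beta> x + mpc \<beta> * x) - Pp \<beta> x) - 2 * M \<le> psi \<beta> x M \<alpha>"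
        by (rule psi_lower_neg[OF b M a0 x])
      then have fl: "(- \<alpha>) * K2 - 2 * M \<le> f \<alpha>" unfolding f_def K2_def by (simp add: algebra_simps)
      have "R2 * K2 < (- \<alpha>) * K2" using 3 K by (intro mult_strict_right_mono) auto
      moreover have "R2 * K2 = 2 * M + K2" unfolding R2_def using K by (simp add: field_simps)
      ultimately have "f \<alpha> > 0" using fl K by linarith
      then show ?thesis using fg by simp
    qed
  qed
  then show ?thesis unfolding f_def by blast
qed

theorem proposition3:
  fixes \<beta> :: real
  assumes "\<beta> > 0"
  shows "(\<forall>x M t. M > 0 \<longrightarrow> psi_star \<beta> x M t \<ge> 0)
    \<and> (\<forall>x t. lam_t_minus \<beta> < x \<and> x < lam_plus \<beta> \<longrightarrow>
         (\<exists>M0. \<forall>M\<ge>M0. \<exists>\<gamma>.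
            (psi \<beta> x M has_real_derivative t) (at \<gamma>)
            \<and> psi_star \<beta> x M t = ereal (\<gamma> * t - psi \<beta> x M \<gamma>)
            \<and> (t < lam_bar \<beta> - x \<longrightarrow> \<gamma> < 0)
            \<and> (t > lam_bar \<beta> - x \<longrightarrow> \<gamma> > 0)))
    \<and> (\<forall>x t1 t2. lam_t_minus \<beta> < x \<and> x < lam_plus \<beta> \<longrightarrow>
         (\<exists>M0. \<forall>M\<ge>M0. \<forall>\<alpha> \<gamma>.
            psi_star \<beta> x M t1 = ereal (\<alpha> * t1 - psi \<beta> x M \<alpha>)
            \<and> psi_star \<beta> x M t2 = ereal (\<gamma> * t2 - psi \<beta> x M \<gamma>)
            \<longrightarrow> psi_star \<beta> x M t2 - psi_star \<beta> x M t1 \<le> ereal (\<gamma> * (t2 - t1))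
              \<and> (psi_star \<beta> x M t2 - psi_star \<beta> x M t1 = ereal (\<gamma> * (t2 - t1))
                   \<longleftrightarrow> t1 = t2)))"
proof (intro conjI)
  note b = assms
  show "\<forall>x M t. M > 0 \<longrightarrow> psi_star \<beta> x M t \<ge> 0"
  proof (intro allI impI)
    fix x M t :: real assume M: "M > 0"
    have "ereal (0 * t - psi \<beta> x M 0) \<le> psi_star \<beta> x M t" by (rule psi_star_ge)
    then show "psi_star \<beta> x M t \<ge> 0" using psi_zero[OF M] by (simp add: zero_ereal_def)
  qed
  show "\<forall>x t. lam_t_minus \<beta> < x \<and> x < lam_plus \<beta> \<longrightarrow>
         (\<exists>M0. \<forall>M\<ge>M0. \<exists>\<gamma>.
            (psi \<beta> x M has_real_derivative t) (at \<gamma>)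
            \<and> psi_star \<beta> x M t = ereal (\<gamma> * t - psi \<beta> x M \<gamma>)
            \<and> (t < lam_bar \<beta> - x \<longrightarrow> \<gamma> < 0)
            \<and> (t > lam_bar \<beta> - x \<longrightarrow> \<gamma> > 0))"
  proof (intro allI impI)
    fix x t :: real
    assume hx: "lam_t_minus \<beta> < x \<and> x < lam_plus \<beta>"
    have x0: "x > 0" using hx lam_t_minus_nonneg[OF b] by linarith
    have Pp: "Pp \<beta> x > 0" using Pp_pos[OF b] hx by simp
    have Q: "Nn \<beta> x + mpc \<beta> * x > 0" using Q_pos[OF b] hx by simp
    define K0 where "K0 = lam_bar \<beta> - x"
    have lim: "((\<lambda>M. mY M * K0) \<longlongrightarrow> K0) at_top"
      using tendsto_mult_right[OF mY_lim, of K0] by simp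
    have ev4: "eventually (\<lambda>M. t < K0 \<longrightarrow> t < mY M * K0) at_top"
    proof (cases "t < K0")
      case True show ?thesis by (rule eventually_mono[OF order_tendstoD(1)[OF lim True]]) simp
    qed simp
    have ev5: "eventually (\<lambda>M. K0 < t \<longrightarrow> mY M * K0 < t) at_top"
    proof (cases "K0 < t")
      case True show ?thesis by (rule eventually_mono[OF order_tendstoD(2)[OF lim True]]) simp
    qed simp
    have ev1: "eventually (\<lambda>M. M \<ge> (1::real)) at_top" by (rule eventually_ge_at_top)
    have ev2: "eventually (\<lambda>M. (M - 1) * Pp \<beta> x > Nn \<beta> x + mpc \<beta> * x + t) at_top"
      by (rule eventually_lin[OF Pp])
    have ev3: "eventually (\<lambda>M. (M - 1) * (Nn \<beta> x + mpc \<beta> * x) > Pp \<beta> x - t) at_top"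
      by (rule eventually_lin[OF Q])
    have "eventually (\<lambda>M. M \<ge> 1 \<and> (M - 1) * Pp \<beta> x > Nn \<beta> x + mpc \<beta> * x + t
        \<and> (M - 1) * (Nn \<beta> x + mpc \<beta> * x) > Pp \<beta> x - t
        \<and> (t < K0 \<longrightarrow> t < mY M * K0) \<and> (K0 < t \<longrightarrow> mY M * K0 < t)) at_top"
      using ev1 ev2 ev3 ev4 ev5 by (intro eventually_conj)
    then obtain M0 where M0: "\<And>M. M \<ge> M0 \<Longrightarrow> M \<ge> 1 \<and> (M - 1) * Pp \<beta> x > Nn \<beta> x + mpc \<beta> * x + t
        \<and> (M - 1) * (Nn \<beta> x + mpc \<beta> * x) > Pp \<beta> x - t
        \<and> (t < K0 \<longrightarrow> t < mY M * K0) \<and> (K0 < t \<longrightarrow> mY M * K0 < t)"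
      unfolding eventually_at_top_linorder by blast
    show "\<exists>M0. \<forall>M\<ge>M0. \<exists>\<gamma>.
            (psi \<beta> x M has_real_derivative t) (at \<gamma>)
            \<and> psi_star \<beta> x M t = ereal (\<gamma> * t - psi \<beta> x M \<gamma>)
            \<and> (t < lam_bar \<beta> - x \<longrightarrow> \<gamma> < 0)
            \<and> (t > lam_bar \<beta> - x \<longrightarrow> \<gamma> > 0)"
    proof (rule exI[of _ M0], intro allI impI)
      fix M assume "M \<ge> M0"
      note MM = M0[OF this]
      have M1: "M \<ge> 1" and Mp: "M > 0" using MM by auto
      have k1: "(M - 1) * Pp \<beta> x - Nn \<beta> x - mpc \<beta> * x - t > 0" using MM by linarith
      have k2: "(M - 1) * (Nn \<beta> x + mpc \<beta> * x) - Pp \<beta> x + t > 0" using MM by linarith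
      obtain \<gamma> where gm: "\<And>\<alpha>. psi \<beta> x M \<gamma> - t * \<gamma> \<le> psi \<beta> x M \<alpha> - t * \<alpha>"
        using minimizer[OF b M1 x0 k1 k2] by blast
      obtain D where D: "(psi \<beta> x M has_real_derivative D) (at \<gamma>)"
        using psi_deriv[OF b Mp] by blast
      have Dt: "D = t" by (rule crit[OF D gm])
      have star: "psi_star \<beta> x M t = ereal (\<gamma> * t - psi \<beta> x M \<gamma>)"
        by (rule psi_star_attained) (use gm in \<open>simp add: algebra_simps\<close>)
      have jen: "\<And>\<alpha>. \<alpha> * (mY M * K0) \<le> psi \<beta> x M \<alpha>"
        using psi_jensen[OF b Mp, of _ x] unfolding K0_def by (simp add: mult.assoc)
      have p0: "psi \<beta> x M 0 = 0" by (rule psi_zero[OF Mp])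
      have s1: "\<gamma> < 0" if tK: "t < K0"
      proof (rule ccontr)
        assume "\<not> \<gamma> < 0"
        then consider "\<gamma> > 0" | "\<gamma> = 0" by linarith
        then show False
        proof cases
          case 1
          have k: "t < mY M * K0" using MM tK by blast
          have "\<gamma> * t < \<gamma> * (mY M * K0)" using 1 k by simp
          then have "psi \<beta> x M \<gamma> - t * \<gamma> > 0" using jen[of \<gamma>] by (simp add: mult.commute)
          moreover have "psi \<beta> x M \<gamma> - t * \<gamma> \<le> 0" using gm[of 0] p0 by simp
          ultimately show False by simp
        next
          case 2
          have k: "t < mY M * K0" using MM tK by blast
          have "D = mY M * K0"
            by (rule crit[OF D]) (use jen p0 2 in \<open>simp add: mult.commute\<close>)
          then show False using k Dt by simp
        qed
      qed
      have s2: "\<gamma> > 0" if tK: "K0 < t"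
      proof (rule ccontr)
        assume "\<not> \<gamma> > 0"
        then consider "\<gamma> < 0" | "\<gamma> = 0" by linarith
        then show False
        proof cases
          case 1
          have k: "mY M * K0 < t" using MM tK by blast
          have "\<gamma> * t < \<gamma> * (mY M * K0)" using 1 k by (simp add: mult_less_cancel_left)
          then have "psi \<beta> x M \<gamma> - t * \<gamma> > 0" using jen[of \<gamma>] by (simp add: mult.commute)
          moreover have "psi \<beta> x M \<gamma> - t * \<gamma> \<le> 0" using gm[of 0] p0 by simp
          ultimately show False by simp
        next
          case 2
          have k: "mY M * K0 < t" using MM tK by blast
          have "D = mY M * K0"
            by (rule crit[OF D]) (use jen p0 2 in \<open>simp add: mult.commute\<close>)
          then show False using k Dt by simp
        qed
      qed
      show "\<exists>\<gamma>. (psi \<beta> x M has_real_derivative t) (at \<gamma>)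
            \<and> psi_star \<beta> x M t = ereal (\<gamma> * t - psi \<beta> x M \<gamma>)
            \<and> (t < lam_bar \<beta> - x \<longrightarrow> \<gamma> < 0)
            \<and> (t > lam_bar \<beta> - x \<longrightarrow> \<gamma> > 0)"
        using D Dt star s1 s2 unfolding K0_def by blast
    qed
  qed
  show "\<forall>x t1 t2. lam_t_minus \<beta> < x \<and> x < lam_plus \<beta> \<longrightarrow>
         (\<exists>M0. \<forall>M\<ge>M0. \<forall>\<alpha> \<gamma>.
            psi_star \<beta> x M t1 = ereal (\<alpha> * t1 - psi \<beta> x M \<alpha>)
            \<and> psi_star \<beta> x M t2 = ereal (\<gamma> * t2 - psi \<beta> x M \<gamma>)
            \<longrightarrow> psi_star \<beta> x M t2 - psi_star \<beta> x M t1 \<le> ereal (\<gamma> * (t2 - t1))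
              \<and> (psi_star \<beta> x M t2 - psi_star \<beta> x M t1 = ereal (\<gamma> * (t2 - t1))
                   \<longleftrightarrow> t1 = t2))"
  proof (intro allI impI exI[of _ 1])
    fix x t1 t2 M \<alpha> \<gamma> :: real
    assume M: "1 \<le> M"
      and h: "psi_star \<beta> x M t1 = ereal (\<alpha> * t1 - psi \<beta> x M \<alpha>)
            \<and> psi_star \<beta> x M t2 = ereal (\<gamma> * t2 - psi \<beta> x M \<gamma>)"
    have Mp: "M > 0" using M by simp
    define A where "A = \<alpha> * t1 - psi \<beta> x M \<alpha>"
    define G2 where "G2 = \<gamma> * t2 - psi \<beta> x M \<gamma>"
    define G1 where "G1 = \<gamma> * t1 - psi \<beta> x M \<gamma>"
    have h1: "psi_star \<beta> x M t1 = ereal A" and h2: "psi_star \<beta> x M t2 = ereal G2"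
      using h unfolding A_def G2_def by auto
    have le1: "G1 \<le> A" using psi_star_ge[of \<gamma> t1 \<beta> x M] h1 unfolding G1_def by simp
    have diff: "psi_star \<beta> x M t2 - psi_star \<beta> x M t1 = ereal (G2 - A)" using h1 h2 by simp
    have G: "G2 - G1 = \<gamma> * (t2 - t1)" unfolding G1_def G2_def by (simp add: algebra_simps)
    show "psi_star \<beta> x M t2 - psi_star \<beta> x M t1 \<le> ereal (\<gamma> * (t2 - t1))
        \<and> (psi_star \<beta> x M t2 - psi_star \<beta> x M t1 = ereal (\<gamma> * (t2 - t1)) \<longleftrightarrow> t1 = t2)"
    proof (intro conjI iffI)
      show "psi_star \<beta> x M t2 - psi_star \<beta> x M t1 \<le> ereal (\<gamma> * (t2 - t1))"
        unfolding diff using le1 G by simp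
    next
      assume "psi_star \<beta> x M t2 - psi_star \<beta> x M t1 = ereal (\<gamma> * (t2 - t1))"
      then have "G2 - A = \<gamma> * (t2 - t1)" unfolding diff by simp
      then have AG: "A = G1" using G by simp
      obtain D where D: "(psi \<beta> x M has_real_derivative D) (at \<gamma>)"
        using psi_deriv[OF b Mp] by blast
      have "D = t1"
      proof (rule crit[OF D])
        fix s
        have "ereal (s * t1 - psi \<beta> x M s) \<le> ereal G1" using psi_star_ge[of s t1 \<beta> x M] h1 AG by simp
        then show "psi \<beta> x M \<gamma> - t1 * \<gamma> \<le> psi \<beta> x M s - t1 * s" unfolding G1_def by (simp add: algebra_simps)
      qed
      moreover have "D = t2"
      proof (rule crit[OF D])
        fix s
        have "ereal (s * t2 - psi \<beta> x M s) \<le> ereal G2" using psi_star_ge[of s t2 \<beta> x M] h2 by simp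
        then show "psi \<beta> x M \<gamma> - t2 * \<gamma> \<le> psi \<beta> x M s - t2 * s" unfolding G2_def by (simp add: algebra_simps)
      qed
      ultimately show "t1 = t2" by simp
    next
      assume "t1 = t2"
      then have "ereal A = ereal G2" using h1 h2 by simp
      then show "psi_star \<beta> x M t2 - psi_star \<beta> x M t1 = ereal (\<gamma> * (t2 - t1))"
        unfolding diff using \<open>t1 = t2\<close> by simp
    qed
  qed
qed

end
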